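(* Let $R=k[x_1,\dots,x_n]$, let $f_1,\dots,f_m\in R$, $\mathbf f=(f_1,\dots,f_m)$, and $I=\langle f_1,\dots,f_m\rangle$. Fix any term order on $R$ and any term order on the free module $R^m$, and run the algorithm AGC (described in the context) on the input $f_1^{[\mathbf e_1]},\dots,f_m^{[\mathbf e_m]}$, using a partial order $<$ on the current set $G$ for the generalized rewritable criterion. If the algorithm AGC terminates after finitely many steps and the partial order $<$ is admissible, then the set $G$ it returns is a labeled Gröbner basis for $I$.
   Context: Notation: a "polynomial in $I$" is a pair written $f^{[\mathbf u]}$ with $\mathbf u=(p_1,\dots,p_m)\in R^m$ and $f=\mathbf u\cdot\mathbf f=\sum p_if_i$; two such pairs are equal iff both components are equal. Operations: $f^{[\mathbf u]}+g^{[\mathbf v]}=(f+g)^{[\mathbf u+\mathbf v]}$ and $ct(f^{[\mathbf u]})=(ctf)^{[ct\mathbf u]}$ for $c\in k$, $t$ a power product. $\mathbf e_i$ is the $i$-th unit vector of $R^m$. $\mathrm{lpp}$ and $\mathrm{lc}$ denote leading power product and leading coefficient (in $R$ w.r.t. the term order on $R$, in $R^m$ w.r.t. the term order on $R^m$); both orders are denoted $\prec$; convention $\mathrm{lpp}(0)=0\prec$ every nonzero power product. The signature of $f^{[\mathbf u]}$ is $\mathrm{lpp}(\mathbf u)$. A module monomial $x^\alpha\mathbf e_i$ divides $x^\beta\mathbf e_j$ iff $i=j$ and $x^\alpha\mid x^\beta$. A polynomial $0^{[\mathbf u]}$ is called a syzygy polynomial. Critical pair: for $f^{[\mathbf u]},g^{[\mathbf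 v]}$ with $f,g\neq0$, let $t=\mathrm{lcm}(\mathrm{lpp}(f),\mathrm{lpp}(g))$, $t_f=t/\mathrm{lpp}(f)$, $t_g=t/\mathrm{lpp}(g)$; if $\mathrm{lpp}(t_f\mathbf u)\succeq\mathrm{lpp}(t_g\mathbf v)$, the 4-tuple $(t_f,f^{[\mathbf u]},t_g,g^{[\mathbf v]})$ is the critical pair of $f^{[\mathbf u]}$ and $g^{[\mathbf v]}$, and its S-polynomial is $t_f(f^{[\mathbf u]})-c\,t_g(g^{[\mathbf v]})$ with $c=\mathrm{lc}(f)/\mathrm{lc}(g)$. The critical pair is regular if $\mathrm{lpp}(t_f\mathbf u)\succ\mathrm{lpp}(t_g\mathbf v)$. Partial order: a relation $<$ on the current set $G$ that is irreflexive, transitive, and such that $a<b$ does not imply $b<a$; it is updated whenever elements are added to $G$. Generalized rewritable: for $f^{[\mathbf u]}\in B$ with $f\ne0$ and a power product $t$, $t(f^{[\mathbf u]})$ is gen-rewritable by $B$ if there exists $g^{[\mathbf v]}\in B$ with $\mathrm{lpp}(\mathbf v)\mid\mathrm{lpp}(t\mathbf u)$ and $g^{[\mathbf v]}<f^{[\mathbf u]}$. A critical pair $(t_f,f^{[\mathbf u]},t_g,g^{[\mathbf v]})$ is gen-rewritable by $B$ if $t_f(f^{[\mathbf u]})$ or $t_g(g^{[\mathbf v]})$ is. One-side reduction: $f^{[\mathbf u]}$ is reducible by $h^{[\mathbf w]}\in G$ ($f,h\ne 0$) if $\mathrm{lpp}(h)\mid\mathrm{lpp}(f)$ and $\mathrm{lpp}(t\mathbf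 w)\prec\mathrm{lpp}(\mathbf u)$ where $t=\mathrm{lpp}(f)/\mathrm{lpp}(h)$; a one-step reduction replaces $f^{[\mathbf u]}$ by $f^{[\mathbf u]}-ct(h^{[\mathbf w]})$, $c=\mathrm{lc}(f)/\mathrm{lc}(h)$. "$f^{[\mathbf u]}$ is reduced to $f'^{[\mathbf u']}$ by $G$" means $f'^{[\mathbf u']}$ is obtained by finitely many one-step reductions and is not reducible by $G$. Algorithm AGC: set $G:=\{f_i^{[\mathbf e_i]}:1\le i\le m\}\cup\{0^{[f_j\mathbf e_i-f_i\mathbf e_j]}:1\le i<j\le m\}$ and CPairs := the set of critical pairs of elements of $G$. While CPairs is nonempty: pick any critical pair $(t_f,f^{[\mathbf u]},t_g,g^{[\mathbf v]})$ in CPairs and remove it; if it is regular and not gen-rewritable by $G$, reduce its S-polynomial by $G$ to $h^{[\mathbf w]}$, add to CPairs the critical pairs of $h^{[\mathbf w]}$ with elements of $G$, and set $G:=G\cup\{h^{[\mathbf w]}\}\cup\{0^{[h\mathbf e_i-f_i\mathbf w]}:1\le i\le m\}$ (updating $<$). Return $G$. Admissible: the partial order $<$ is admissible if whenever the algorithm reduces the S-polynomial of a critical pair $(t_f,f^{[\mathbf u]},t_g,g^{[\mathbf v]})$ of $G$ to $h^{[\mathbf w]}$, after updating $<$ for $G\cup\{h^{[\mathbf w]}\}$ one has $h^{[\mathbf w]}<f^{[\mathbf u]}$. Labeled Gröbner basis: a finite set $G$ of polynomials in $I$ such that for every $f^{[\mathbf u]}$ in $I$ with $f\ne0$ there is $g^{[\mathbf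 v]}\in G$ with $\mathrm{lpp}(g)\mid\mathrm{lpp}(f)$ and $\mathrm{lpp}(t\mathbf v)\preceq\mathrm{lpp}(\mathbf u)$, where $t=\mathrm{lpp}(f)/\mathrm{lpp}(g)$. *)

theory Defs
  imports Main "HOL-Library.Poly_Mapping"
begin

text \<open>
  Power products in the variables of the finite type 'x are exponent vectors
  (x =>0 nat); polynomials of R = k[x] are finitely supported maps from power products to k.
  Generators f_1..f_m are indexed 0..m-1 (fs :: nat \<Rightarrow> poly, only i < m used).
  Elements of R^m are functions nat \<Rightarrow> poly vanishing at indices \<ge> m.
  A module monomial x^a e_i is the pair (a, i).
  A term order on R is given as a relation ord (meaning \<preceq>), a term order on R^m
  as a relation mo on module monomials (meaning \<preceq>).
\<close>

type_synonym 'x pp = "'x \<Rightarrow>\<^sub>0 nat"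
type_synonym ('x, 'k) poly = "'x pp \<Rightarrow>\<^sub>0 'k"
type_synonym ('x, 'k) vec = "nat \<Rightarrow> ('x, 'k) poly"
type_synonym ('x, 'k) lpoly = "('x, 'k) poly \<times> ('x, 'k) vec"
type_synonym ('x, 'k) cpair = "'x pp \<times> ('x, 'k) lpoly \<times> 'x pp \<times> ('x, 'k) lpoly"

definition pp_dvd :: "'x pp \<Rightarrow> 'x pp \<Rightarrow> bool" where
  "pp_dvd s t \<longleftrightarrow> (\<forall>x. Poly_Mapping.lookup s x \<le> Poly_Mapping.lookup t x)"

definition pp_div :: "'x pp \<Rightarrow> 'x pp \<Rightarrow> 'x pp" where
  "pp_div t s = t - s"

definition pp_lcm :: "'x pp \<Rightarrow> 'x pp \<Rightarrow> 'x pp" where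
  "pp_lcm s t = s + (t - s)"

definition term_order :: "('x pp \<Rightarrow> 'x pp \<Rightarrow> bool) \<Rightarrow> bool" where
  "term_order ord \<longleftrightarrow>
     (\<forall>s. ord s s) \<and>
     (\<forall>s t. ord s t \<and> ord t s \<longrightarrow> s = t) \<and>
     (\<forall>s t u. ord s t \<and> ord t u \<longrightarrow> ord s u) \<and>
     (\<forall>s t. ord s t \<or> ord t s) \<and>
     (\<forall>t. ord 0 t) \<and>
     (\<forall>s t u. ord s t \<longrightarrow> ord (s + u) (t + u))"

definition module_term_order :: "nat \<Rightarrow> ('x pp \<times> nat \<Rightarrow> 'x pp \<times> nat \<Rightarrow> bool) \<Rightarrow> bool" where
  "module_term_order m mo \<longleftrightarrow>
     (\<forall>a. snd a < m \<longrightarrow> mo a a) \<and>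
     (\<forall>a b. snd a < m \<and> snd b < m \<and> mo a b \<and> mo b a \<longrightarrow> a = b) \<and>
     (\<forall>a b c. snd a < m \<and> snd b < m \<and> snd c < m \<and> mo a b \<and> mo b c \<longrightarrow> mo a c) \<and>
     (\<forall>a b. snd a < m \<and> snd b < m \<longrightarrow> mo a b \<or> mo b a) \<and>
     (\<forall>t i. i < m \<longrightarrow> mo (0, i) (t, i)) \<and>
     (\<forall>s i t j u. i < m \<and> j < m \<and> mo (s, i) (t, j) \<longrightarrow> mo (s + u, i) (t + u, j))"

text \<open>leading power product of a nonzero polynomial (only used for f \<noteq> 0)\<close>
definition lpp :: "('x pp \<Rightarrow> 'x pp \<Rightarrow> bool) \<Rightarrow> ('x, 'k::zero) poly \<Rightarrow> 'x pp" where
  "lpp ord f = (THE t. t \<in> Poly_Mapping.keys f \<and> (\<forall>s\<in>Poly_Mapping.keys f. ord s t))"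

definition lc :: "('x pp \<Rightarrow> 'x pp \<Rightarrow> bool) \<Rightarrow> ('x, 'k::zero) poly \<Rightarrow> 'k" where
  "lc ord f = Poly_Mapping.lookup f (lpp ord f)"

definition msupp :: "nat \<Rightarrow> ('x, 'k::zero) vec \<Rightarrow> ('x pp \<times> nat) set" where
  "msupp m u = {(t, i). i < m \<and> t \<in> Poly_Mapping.keys (u i)}"

text \<open>lpp of a module element; None encodes lpp(0) = 0, below every module monomial\<close>
definition sig :: "nat \<Rightarrow> ('x pp \<times> nat \<Rightarrow> 'x pp \<times> nat \<Rightarrow> bool) \<Rightarrow> ('x, 'k::zero) vec
    \<Rightarrow> ('x pp \<times> nat) option" where
  "sig m mo u = (if msupp m u = {} then None
                 else Some (THE a. a \<in> msupp m u \<and> (\<forall>b\<in>msupp m u. mo b a)))"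

definition sig_less :: "('x pp \<times> nat \<Rightarrow> 'x pp \<times> nat \<Rightarrow> bool) \<Rightarrow> ('x pp \<times> nat) option
    \<Rightarrow> ('x pp \<times> nat) option \<Rightarrow> bool" where
  "sig_less mo a b = (case (a, b) of
      (None, None) \<Rightarrow> False
    | (None, Some _) \<Rightarrow> True
    | (Some _, None) \<Rightarrow> False
    | (Some x, Some y) \<Rightarrow> mo x y \<and> x \<noteq> y)"

definition mdvd :: "'x pp \<times> nat \<Rightarrow> 'x pp \<times> nat \<Rightarrow> bool" where
  "mdvd a b \<longleftrightarrow> snd a = snd b \<and> pp_dvd (fst a) (fst b)"

definition vmult :: "'x pp \<Rightarrow> ('x, 'k::comm_ring_1) vec \<Rightarrow> ('x, 'k) vec" where
  "vmult t u = (\<lambda>i. Poly_Mapping.single t 1 * u i)"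

definition lscale :: "'k::comm_ring_1 \<Rightarrow> 'x pp \<Rightarrow> ('x, 'k) lpoly \<Rightarrow> ('x, 'k) lpoly" where
  "lscale c t a = (Poly_Mapping.single t c * fst a, \<lambda>i. Poly_Mapping.single t c * snd a i)"

definition lsub :: "('x, 'k::comm_ring_1) lpoly \<Rightarrow> ('x, 'k) lpoly \<Rightarrow> ('x, 'k) lpoly" where
  "lsub a b = (fst a - fst b, \<lambda>i. snd a i - snd b i)"

definition is_vec :: "nat \<Rightarrow> ('x, 'k::zero) vec \<Rightarrow> bool" where
  "is_vec m u \<longleftrightarrow> (\<forall>i\<ge>m. u i = 0)"

definition dot :: "nat \<Rightarrow> ('x, 'k::comm_ring_1) vec \<Rightarrow> ('x, 'k) vec \<Rightarrow> ('x, 'k) poly" where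
  "dot m u fs = (\<Sum>i<m. u i * fs i)"

text \<open>f^[u] is a polynomial in I = <f_1..f_m>\<close>
definition in_I :: "nat \<Rightarrow> ('x, 'k::comm_ring_1) vec \<Rightarrow> ('x, 'k) lpoly \<Rightarrow> bool" where
  "in_I m fs a \<longleftrightarrow> is_vec m (snd a) \<and> fst a = dot m (snd a) fs"

definition unitv :: "nat \<Rightarrow> ('x, 'k::comm_ring_1) vec" where
  "unitv i = (\<lambda>k. if k = i then 1 else 0)"

definition is_cpair :: "('x pp \<Rightarrow> 'x pp \<Rightarrow> bool) \<Rightarrow> nat \<Rightarrow> ('x pp \<times> nat \<Rightarrow> 'x pp \<times> nat \<Rightarrow> bool)
    \<Rightarrow> ('x, 'k::comm_ring_1) lpoly \<Rightarrow> ('x, 'k) lpoly \<Rightarrow> ('x, 'k) cpair \<Rightarrow> bool" where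
  "is_cpair ord m mo a b p \<longleftrightarrow>
     fst a \<noteq> 0 \<and> fst b \<noteq> 0 \<and>
     (let t = pp_lcm (lpp ord (fst a)) (lpp ord (fst b));
          tf = pp_div t (lpp ord (fst a));
          tg = pp_div t (lpp ord (fst b))
      in p = (tf, a, tg, b) \<and>
         \<not> sig_less mo (sig m mo (vmult tf (snd a))) (sig m mo (vmult tg (snd b))))"

definition cpairs_of :: "('x pp \<Rightarrow> 'x pp \<Rightarrow> bool) \<Rightarrow> nat \<Rightarrow> ('x pp \<times> nat \<Rightarrow> 'x pp \<times> nat \<Rightarrow> bool)
    \<Rightarrow> ('x, 'k::comm_ring_1) lpoly set \<Rightarrow> ('x, 'k) lpoly set \<Rightarrow> ('x, 'k) cpair set" where
  "cpairs_of ord m mo A B = {p. \<exists>a\<in>A. \<exists>b\<in>B. is_cpair ord m mo a b p}"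

definition spoly :: "('x pp \<Rightarrow> 'x pp \<Rightarrow> bool) \<Rightarrow> ('x, 'k::field) cpair \<Rightarrow> ('x, 'k) lpoly" where
  "spoly ord p = (case p of (tf, a, tg, b) \<Rightarrow>
     lsub (lscale 1 tf a) (lscale (lc ord (fst a) / lc ord (fst b)) tg b))"

definition regular_cpair :: "nat \<Rightarrow> ('x pp \<times> nat \<Rightarrow> 'x pp \<times> nat \<Rightarrow> bool)
    \<Rightarrow> ('x, 'k::comm_ring_1) cpair \<Rightarrow> bool" where
  "regular_cpair m mo p = (case p of (tf, a, tg, b) \<Rightarrow>
     sig_less mo (sig m mo (vmult tg (snd b))) (sig m mo (vmult tf (snd a))))"

definition gen_rewritable :: "nat \<Rightarrow> ('x pp \<times> nat \<Rightarrow> 'x pp \<times> nat \<Rightarrow> bool)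
    \<Rightarrow> (('x, 'k::comm_ring_1) lpoly \<Rightarrow> ('x, 'k) lpoly \<Rightarrow> bool)
    \<Rightarrow> ('x, 'k) lpoly set \<Rightarrow> 'x pp \<Rightarrow> ('x, 'k) lpoly \<Rightarrow> bool" where
  "gen_rewritable m mo lt B t a \<longleftrightarrow>
     a \<in> B \<and> fst a \<noteq> 0 \<and>
     (\<exists>b\<in>B. \<exists>M N. sig m mo (snd b) = Some M \<and> sig m mo (vmult t (snd a)) = Some N \<and>
              mdvd M N \<and> lt b a)"

definition cpair_gen_rewritable :: "nat \<Rightarrow> ('x pp \<times> nat \<Rightarrow> 'x pp \<times> nat \<Rightarrow> bool)
    \<Rightarrow> (('x, 'k::comm_ring_1) lpoly \<Rightarrow> ('x, 'k) lpoly \<Rightarrow> bool)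
    \<Rightarrow> ('x, 'k) lpoly set \<Rightarrow> ('x, 'k) cpair \<Rightarrow> bool" where
  "cpair_gen_rewritable m mo lt B p = (case p of (tf, a, tg, b) \<Rightarrow>
     gen_rewritable m mo lt B tf a \<or> gen_rewritable m mo lt B tg b)"

definition red1 :: "('x pp \<Rightarrow> 'x pp \<Rightarrow> bool) \<Rightarrow> nat \<Rightarrow> ('x pp \<times> nat \<Rightarrow> 'x pp \<times> nat \<Rightarrow> bool)
    \<Rightarrow> ('x, 'k::field) lpoly set \<Rightarrow> ('x, 'k) lpoly \<Rightarrow> ('x, 'k) lpoly \<Rightarrow> bool" where
  "red1 ord m mo G a a' \<longleftrightarrow>
     (\<exists>h\<in>G. fst a \<noteq> 0 \<and> fst h \<noteq> 0 \<and> pp_dvd (lpp ord (fst h)) (lpp ord (fst a)) \<and>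
        (let t = pp_div (lpp ord (fst a)) (lpp ord (fst h)) in
          sig_less mo (sig m mo (vmult t (snd h))) (sig m mo (snd a)) \<and>
          a' = lsub a (lscale (lc ord (fst a) / lc ord (fst h)) t h)))"

definition reduces_to :: "('x pp \<Rightarrow> 'x pp \<Rightarrow> bool) \<Rightarrow> nat \<Rightarrow> ('x pp \<times> nat \<Rightarrow> 'x pp \<times> nat \<Rightarrow> bool)
    \<Rightarrow> ('x, 'k::field) lpoly set \<Rightarrow> ('x, 'k) lpoly \<Rightarrow> ('x, 'k) lpoly \<Rightarrow> bool" where
  "reduces_to ord m mo G a a' \<longleftrightarrow>
     (red1 ord m mo G)\<^sup>*\<^sup>* a a' \<and> \<not> (\<exists>c. red1 ord m mo G a' c)"

definition G_init :: "nat \<Rightarrow> ('x, 'k::comm_ring_1) vec \<Rightarrow> ('x, 'k) lpoly set" where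
  "G_init m fs =
     {(fs i, unitv i) | i. i < m} \<union>
     {(0, \<lambda>k. (if k = i then fs j else 0) - (if k = j then fs i else 0)) | i j. i < j \<and> j < m}"

definition new_syz :: "nat \<Rightarrow> ('x, 'k::comm_ring_1) vec \<Rightarrow> ('x, 'k) lpoly \<Rightarrow> ('x, 'k) lpoly set" where
  "new_syz m fs h = {(0, \<lambda>k. (if k = i then fst h else 0) - fs i * snd h k) | i. i < m}"

text \<open>One iteration of the while loop: pick pair p from CP; r records the result of
  the reduction (None if the pair was discarded).\<close>
definition agc_step :: "('x pp \<Rightarrow> 'x pp \<Rightarrow> bool) \<Rightarrow> nat \<Rightarrow> ('x pp \<times> nat \<Rightarrow> 'x pp \<times> nat \<Rightarrow> bool)
    \<Rightarrow> ('x, 'k::field) vec \<Rightarrow> (('x, 'k) lpoly \<Rightarrow> ('x, 'k) lpoly \<Rightarrow> bool)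
    \<Rightarrow> ('x, 'k) lpoly set \<Rightarrow> ('x, 'k) cpair set \<Rightarrow> ('x, 'k) cpair \<Rightarrow> ('x, 'k) lpoly option
    \<Rightarrow> ('x, 'k) lpoly set \<Rightarrow> ('x, 'k) cpair set \<Rightarrow> bool" where
  "agc_step ord m mo fs lt G CP p r G' CP' \<longleftrightarrow>
     p \<in> CP \<and>
     (if regular_cpair m mo p \<and> \<not> cpair_gen_rewritable m mo lt G p
      then (\<exists>h. r = Some h \<and> reduces_to ord m mo G (spoly ord p) h \<and>
              CP' = (CP - {p}) \<union> cpairs_of ord m mo {h} G \<union> cpairs_of ord m mo G {h} \<and>
              G' = G \<union> {h} \<union> new_syz m fs h)
      else r = None \<and> G' = G \<and> CP' = CP - {p})"

text \<open>A terminating run of AGC of N iterations, with states Gs k, CPs k, chosen pairs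
  ps k and reduction results rs k.\<close>
definition agc_run :: "('x pp \<Rightarrow> 'x pp \<Rightarrow> bool) \<Rightarrow> nat \<Rightarrow> ('x pp \<times> nat \<Rightarrow> 'x pp \<times> nat \<Rightarrow> bool)
    \<Rightarrow> ('x, 'k::field) vec \<Rightarrow> (('x, 'k) lpoly \<Rightarrow> ('x, 'k) lpoly \<Rightarrow> bool)
    \<Rightarrow> nat \<Rightarrow> (nat \<Rightarrow> ('x, 'k) lpoly set) \<Rightarrow> (nat \<Rightarrow> ('x, 'k) cpair set)
    \<Rightarrow> (nat \<Rightarrow> ('x, 'k) cpair) \<Rightarrow> (nat \<Rightarrow> ('x, 'k) lpoly option) \<Rightarrow> bool" where
  "agc_run ord m mo fs lt N Gs CPs ps rs \<longleftrightarrow>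
     Gs 0 = G_init m fs \<and>
     CPs 0 = cpairs_of ord m mo (G_init m fs) (G_init m fs) \<and>
     (\<forall>k<N. agc_step ord m mo fs lt (Gs k) (CPs k) (ps k) (rs k) (Gs (Suc k)) (CPs (Suc k))) \<and>
     CPs N = {}"

text \<open>It is given as one relation on labeled polynomials whose restriction to the
  current G is used at each stage (updating = extending to new elements).\<close>
definition strict_po_on :: "'a set \<Rightarrow> ('a \<Rightarrow> 'a \<Rightarrow> bool) \<Rightarrow> bool" where
  "strict_po_on A lt \<longleftrightarrow> (\<forall>a\<in>A. \<not> lt a a) \<and>
     (\<forall>a\<in>A. \<forall>b\<in>A. \<forall>c\<in>A. lt a b \<and> lt b c \<longrightarrow> lt a c)"

text \<open>Admissible: whenever the S-polynomial of (tf, f^[u], tg, g^[v]) is reduced to h^[w],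
  then h^[w] < f^[u].\<close>
definition admissible_run :: "nat \<Rightarrow> (('x, 'k) lpoly \<Rightarrow> ('x, 'k) lpoly \<Rightarrow> bool)
    \<Rightarrow> (nat \<Rightarrow> ('x, 'k) cpair) \<Rightarrow> (nat \<Rightarrow> ('x, 'k) lpoly option) \<Rightarrow> bool" where
  "admissible_run N lt ps rs \<longleftrightarrow>
     (\<forall>k<N. \<forall>h. rs k = Some h \<longrightarrow> lt h (fst (snd (ps k))))"

definition labeled_GB :: "('x pp \<Rightarrow> 'x pp \<Rightarrow> bool) \<Rightarrow> nat \<Rightarrow> ('x pp \<times> nat \<Rightarrow> 'x pp \<times> nat \<Rightarrow> bool)
    \<Rightarrow> ('x, 'k::comm_ring_1) vec \<Rightarrow> ('x, 'k) lpoly set \<Rightarrow> bool" where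
  "labeled_GB ord m mo fs G \<longleftrightarrow>
     finite G \<and> (\<forall>g\<in>G. in_I m fs g) \<and>
     (\<forall>a. in_I m fs a \<and> fst a \<noteq> 0 \<longrightarrow>
        (\<exists>g\<in>G. fst g \<noteq> 0 \<and> pp_dvd (lpp ord (fst g)) (lpp ord (fst a)) \<and>
           \<not> sig_less mo (sig m mo (snd a))
               (sig m mo (vmult (pp_div (lpp ord (fst a)) (lpp ord (fst g))) (snd g)))))"

end

theory Submission
  imports Defs Complex_Main "HOL-Library.Infinite_Set"
begin

lemma lookup_single_mult:
  fixes f :: "('x pp \<Rightarrow>\<^sub>0 'k::comm_ring_1)"
  shows "Poly_Mapping.lookup (Poly_Mapping.single u c * f) k =
     (if \<exists>s. k = u + s then c * Poly_Mapping.lookup f (k - u) else 0)"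
proof -
  have "Poly_Mapping.lookup (Poly_Mapping.single u c * f) k =
    (\<Sum>l. Poly_Mapping.lookup (Poly_Mapping.single u c) l * (\<Sum>q. Poly_Mapping.lookup f q when k = l + q))"
    by (rule lookup_mult)
  also have "\<dots> = c * (\<Sum>q. Poly_Mapping.lookup f q when k = u + q)"
    by (simp add: lookup_single when_mult Sum_any.delta)
  also have "(\<Sum>q. Poly_Mapping.lookup f q when k = u + q) =
     (if \<exists>s. k = u + s then Poly_Mapping.lookup f (k - u) else 0)"
  proof (cases "\<exists>s. k = u + s")
    case True
    then obtain s where s: "k = u + s" by blast
    have "(\<Sum>q. Poly_Mapping.lookup f q when k = u + q) = (\<Sum>q. Poly_Mapping.lookup f q when q = s)"
      by (rule Sum_any.cong) (auto simp: s when_def)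
    also have "\<dots> = Poly_Mapping.lookup f s" by (simp add: Sum_any.delta)
    finally show ?thesis using True s by simp
  next
    case False
    then show ?thesis by (simp add: when_def)
  qed
  finally show ?thesis by simp
qed

lemma lookup_single_mult_add:
  fixes f :: "('x pp \<Rightarrow>\<^sub>0 'k::comm_ring_1)"
  shows "Poly_Mapping.lookup (Poly_Mapping.single u c * f) (u + s) = c * Poly_Mapping.lookup f s"
  by (auto simp: lookup_single_mult)

lemma keys_single_mult:
  fixes f :: "('x pp \<Rightarrow>\<^sub>0 'k::field)"
  assumes "c \<noteq> 0"
  shows "Poly_Mapping.keys (Poly_Mapping.single u c * f) = (\<lambda>s. u + s) ` Poly_Mapping.keys f"
proof (rule set_eqI)
  fix k
  show "k \<in> Poly_Mapping.keys (Poly_Mapping.single u c * f) \<longleftrightarrow> k \<in> (\<lambda>s. u + s) ` Poly_Mapping.keys f"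
  proof (cases "\<exists>s. k = u + s")
    case True
    then obtain s where s: "k = u + s" by blast
    show ?thesis using assms by (auto simp: s in_keys_iff lookup_single_mult_add)
  next
    case False
    then show ?thesis by (auto simp: in_keys_iff lookup_single_mult)
  qed
qed

lemma single_mult_zero_iff:
  fixes f :: "('x pp \<Rightarrow>\<^sub>0 'k::field)"
  assumes "c \<noteq> 0"
  shows "Poly_Mapping.single u c * f = 0 \<longleftrightarrow> f = 0"
  using keys_single_mult[OF assms, of u f] by (metis image_is_empty keys_eq_empty)

lemma single_mult_single:
  fixes f :: "('x pp \<Rightarrow>\<^sub>0 'k::comm_ring_1)"
  shows "Poly_Mapping.single u c * (Poly_Mapping.single v d * f) = Poly_Mapping.single (u + v) (c * d) * f"
  by (simp add: mult.assoc[symmetric] mult_single)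

lemma pp_dvd_iff: "pp_dvd s t \<longleftrightarrow> (\<exists>u. t = s + u)"
proof
  assume "pp_dvd s t"
  then have "t = s + (t - s)"
    by (intro poly_mapping_eqI) (auto simp: pp_dvd_def lookup_add lookup_minus)
  then show "\<exists>u. t = s + u" by blast
next
  assume "\<exists>u. t = s + u"
  then show "pp_dvd s t" by (auto simp: pp_dvd_def lookup_add)
qed

lemma pp_div_add: "pp_dvd s t \<Longrightarrow> s + pp_div t s = t"
  by (auto simp: pp_dvd_iff pp_div_def)

lemma pp_div_add2 [simp]: "pp_div (s + u) s = (u :: 'x pp)"
  by (simp add: pp_div_def)

lemma pp_dvd_add [simp]: "pp_dvd s (s + u)"
  by (auto simp: pp_dvd_iff)

lemma pp_dvd_trans: "pp_dvd a b \<Longrightarrow> pp_dvd b c \<Longrightarrow> pp_dvd a c"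
  by (auto simp: pp_dvd_def intro: le_trans)

lemma lookup_pp_lcm: "Poly_Mapping.lookup (pp_lcm s t) x = max (Poly_Mapping.lookup s x) (Poly_Mapping.lookup t x)"
  by (simp add: pp_lcm_def lookup_add lookup_minus)

lemma pp_lcm_dvd1: "pp_dvd s (pp_lcm s t)" and pp_lcm_dvd2: "pp_dvd t (pp_lcm s t)"
  by (auto simp: pp_dvd_def lookup_pp_lcm)

lemma pp_lcm_least: "pp_dvd s w \<Longrightarrow> pp_dvd t w \<Longrightarrow> pp_dvd (pp_lcm s t) w"
  by (auto simp: pp_dvd_def lookup_pp_lcm)

lemma mdvd_trans: "mdvd a b \<Longrightarrow> mdvd b c \<Longrightarrow> mdvd a c"
  by (auto simp: mdvd_def intro: pp_dvd_trans)

lemma finite_max_ex: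
  assumes "finite A" "A \<noteq> {}"
    and tot: "\<forall>x\<in>A. \<forall>y\<in>A. R x y \<or> R y x"
    and tr: "\<forall>x\<in>A. \<forall>y\<in>A. \<forall>z\<in>A. R x y \<longrightarrow> R y z \<longrightarrow> R x z"
  shows "\<exists>x\<in>A. \<forall>y\<in>A. R y x"
  using assms(1,2,3,4)
proof (induction A rule: finite_ne_induct)
  case (singleton x)
  have "R x x" using singleton(1) by simp
  then show ?case by simp
next
  case (insert x F)
  have totF: "\<forall>x\<in>F. \<forall>y\<in>F. R x y \<or> R y x" using insert.prems(1) by blast
  have trF: "\<forall>x\<in>F. \<forall>y\<in>F. \<forall>z\<in>F. R x y \<longrightarrow> R y z \<longrightarrow> R x z"
  proof (intro ballI impI)
    fix a b c assume "a \<in> F" "b \<in> F" "c \<in> F" "R a b" "R b c"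
    then show "R a c" using insert.prems(2) by (meson insertCI)
  qed
  obtain y where y: "y \<in> F" "\<forall>z\<in>F. R z y" using insert.IH[OF totF trF] by blast
  show ?case
  proof (cases "R x y")
    case True
    have "\<forall>z\<in>insert x F. R z y" using True y(2) by blast
    then show ?thesis using y(1) by blast
  next
    case False
    have yF: "y \<in> insert x F" and xF: "x \<in> insert x F" using y(1) by auto
    then have yx: "R y x" using insert.prems(1) False by meson
    have xx: "R x x" using insert.prems(1) xF by meson
    have "\<forall>z\<in>insert x F. R z x"
    proof
      fix z assume z: "z \<in> insert x F"
      show "R z x"
      proof (cases "z = x")
        case True then show ?thesis using xx by simp
      next
        case False
        then have "z \<in> F" using z by simp
        then have "R z y" using y by blast
        then show ?thesis using insert.prems(2) yx z yF xF by meson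
      qed
    qed
    then show ?thesis using xF by blast
  qed
qed
lemma the_max_eq:
  assumes "x \<in> A" "\<forall>y\<in>A. R y x"
    and an: "\<forall>x\<in>A. \<forall>y\<in>A. R x y \<longrightarrow> R y x \<longrightarrow> x = y"
  shows "(THE x. x \<in> A \<and> (\<forall>y\<in>A. R y x)) = x"
proof (rule the_equality)
  show "x \<in> A \<and> (\<forall>y\<in>A. R y x)" using assms(1,2) by blast
next
  fix y assume "y \<in> A \<and> (\<forall>z\<in>A. R z y)"
  then show "y = x" using assms(1,2) an by metis
qed

lemma finite_min_ex:
  assumes "finite A" "A \<noteq> {}"
    and irr: "\<forall>x\<in>A. \<not> R x x"
    and tr: "\<forall>x\<in>A. \<forall>y\<in>A. \<forall>z\<in>A. R x y \<longrightarrow> R y z \<longrightarrow> R x z"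
  shows "\<exists>x\<in>A. \<forall>y\<in>A. \<not> R y x"
  using assms(1,2,3,4)
proof (induction A rule: finite_ne_induct)
  case (singleton x)
  then have "\<not> R x x" by blast
  then show ?case by blast
next
  case (insert x F)
  have irrF: "\<forall>x\<in>F. \<not> R x x" using insert.prems(1) by blast
  have trF: "\<forall>x\<in>F. \<forall>y\<in>F. \<forall>z\<in>F. R x y \<longrightarrow> R y z \<longrightarrow> R x z"
  proof (intro ballI impI)
    fix a b c assume "a \<in> F" "b \<in> F" "c \<in> F" "R a b" "R b c"
    then show "R a c" using insert.prems(2) by (meson insertCI)
  qed
  obtain y where y: "y \<in> F" "\<forall>z\<in>F. \<not> R z y" using insert.IH[OF irrF trF] by blast
  have yF: "y \<in> insert x F" and xF: "x \<in> insert x F" using y(1) by auto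
  show ?case
  proof (cases "R x y")
    case True
    have "\<forall>z\<in>insert x F. \<not> R z x"
    proof
      fix z assume z: "z \<in> insert x F"
      show "\<not> R z x"
      proof
        assume zx: "R z x"
        show False
        proof (cases "z = x")
          case True then show ?thesis using zx insert.prems(1) xF by blast
        next
          case False
          then have "z \<in> F" using z by simp
          moreover have "R z y" using insert.prems(2) zx True z xF yF by meson
          ultimately show ?thesis using y(2) by blast
        qed
      qed
    qed
    then show ?thesis using xF by blast
  next
    case False
    have "\<forall>z\<in>insert x F. \<not> R z y" using False y(2) by blast
    then show ?thesis using yF by blast
  qed
qed

definition shft :: "'x pp \<Rightarrow> ('x pp \<times> nat) \<Rightarrow> ('x pp \<times> nat)" where
  "shft u a = (u + fst a, snd a)"

lemma shft_add: "shft (u + t) a = shft u (shft t a)"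
  by (simp add: shft_def add.assoc)

lemma vmult_add:
  fixes v :: "('x, 'k::comm_ring_1) vec"
  shows "vmult (u + t) v = vmult u (vmult t v)"
  by (simp add: vmult_def single_mult_single)

lemma snd_lscale: "snd (lscale c t a) = (\<lambda>i. Poly_Mapping.single t c * snd a i)"
  by (simp add: lscale_def)
lemma fst_lscale: "fst (lscale c t a) = Poly_Mapping.single t c * fst a"
  by (simp add: lscale_def)
lemma snd_lscale1: "snd (lscale 1 t a) = vmult t (snd a)"
  by (simp add: lscale_def vmult_def)
lemma fst_lsub: "fst (lsub a b) = fst a - fst b"
  by (simp add: lsub_def)
lemma snd_lsub: "snd (lsub a b) = (\<lambda>i. snd a i - snd b i)"
  by (simp add: lsub_def)

lemma sig_less_simps [simp]:
  "sig_less mo None None = False"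
  "sig_less mo None (Some b) = True"
  "sig_less mo (Some a) None = False"
  "sig_less mo (Some a) (Some b) = (mo a b \<and> a \<noteq> b)"
  by (simp_all add: sig_less_def)

lemma msupp_finite: "finite (msupp m u)"
proof -
  have "msupp m u \<subseteq> (\<Union>i<m. (\<lambda>t. (t, i)) ` Poly_Mapping.keys (u i))"
    by (auto simp: msupp_def)
  then show ?thesis by (rule finite_subset) auto
qed

lemma msupp_index: "a \<in> msupp m u \<Longrightarrow> snd a < m"
  by (auto simp: msupp_def)

lemma sig_None: "sig m mo u = None \<longleftrightarrow> msupp m u = {}"
  by (simp add: sig_def)

locale agc_ord =
  fixes ord :: "('x::finite) pp \<Rightarrow> 'x pp \<Rightarrow> bool"
    and mo :: "'x pp \<times> nat \<Rightarrow> 'x pp \<times> nat \<Rightarrow> bool"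
    and m :: nat
  assumes to: "term_order ord" and mto: "module_term_order m mo"
begin

lemma ord_refl: "ord s s" using to unfolding term_order_def by blast
lemma ord_antisym: "ord s t \<Longrightarrow> ord t s \<Longrightarrow> s = t" using to unfolding term_order_def by blast
lemma ord_trans: "ord s t \<Longrightarrow> ord t u \<Longrightarrow> ord s u" using to unfolding term_order_def by blast
lemma ord_total: "ord s t \<or> ord t s" using to unfolding term_order_def by blast
lemma ord_plus: "ord s t \<Longrightarrow> ord (s + u) (t + u)" using to unfolding term_order_def by blast

lemma mo_refl: "snd a < m \<Longrightarrow> mo a a" using mto unfolding module_term_order_def by blast
lemma mo_antisym: "snd a < m \<Longrightarrow> snd b < m \<Longrightarrow> mo a b \<Longrightarrow> mo b a \<Longrightarrow> a = b"
  using mto unfolding module_term_order_def by blast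
lemma mo_trans: "snd a < m \<Longrightarrow> snd b < m \<Longrightarrow> snd c < m \<Longrightarrow> mo a b \<Longrightarrow> mo b c \<Longrightarrow> mo a c"
  using mto unfolding module_term_order_def by blast
lemma mo_total: "snd a < m \<Longrightarrow> snd b < m \<Longrightarrow> mo a b \<or> mo b a"
  using mto unfolding module_term_order_def by blast
lemma mo_zero: "i < m \<Longrightarrow> mo (0, i) (t, i)"
  using mto unfolding module_term_order_def by blast
lemma mo_plus: "i < m \<Longrightarrow> j < m \<Longrightarrow> mo (s, i) (t, j) \<Longrightarrow> mo (s + u, i) (t + u, j)"
  using mto unfolding module_term_order_def by blast

lemma mo_shft: "snd a < m \<Longrightarrow> snd b < m \<Longrightarrow> mo a b \<Longrightarrow> mo (shft u a) (shft u b)"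
  using mo_plus[of "snd a" "snd b" "fst a" "fst b" u] by (simp add: shft_def add.commute)

lemma shft_inj: "shft u a = shft u b \<Longrightarrow> a = b"
  by (cases a, cases b) (simp add: shft_def)

lemma mdvd_mo: "snd b < m \<Longrightarrow> mdvd a b \<Longrightarrow> mo a b"
proof -
  assume i: "snd b < m" and d: "mdvd a b"
  obtain u where u: "fst b = fst a + u" using d by (auto simp: mdvd_def pp_dvd_iff)
  have "mo (0 + fst a, snd b) (u + fst a, snd b)"
    using mo_plus[OF i i mo_zero[OF i, of u]] by simp
  then show ?thesis using d u by (cases a, cases b) (simp add: mdvd_def add.commute)
qed

lemma lpp_prop:
  fixes f :: "('x, 'k::zero) poly"
  assumes "f \<noteq> 0"
  shows "lpp ord f \<in> Poly_Mapping.keys f \<and> (\<forall>s\<in>Poly_Mapping.keys f. ord s (lpp ord f))"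
proof -
  have fin: "finite (Poly_Mapping.keys f)" and ne: "Poly_Mapping.keys f \<noteq> {}" using assms by auto
  have tot: "\<forall>x\<in>Poly_Mapping.keys f. \<forall>y\<in>Poly_Mapping.keys f. ord x y \<or> ord y x"
    using ord_total by blast
  have tr: "\<forall>x\<in>Poly_Mapping.keys f. \<forall>y\<in>Poly_Mapping.keys f. \<forall>z\<in>Poly_Mapping.keys f. ord x y \<longrightarrow> ord y z \<longrightarrow> ord x z"
    using ord_trans by blast
  obtain x where x: "x \<in> Poly_Mapping.keys f" "\<forall>y\<in>Poly_Mapping.keys f. ord y x"
    using finite_max_ex[OF fin ne tot tr] by blast
  have an: "\<forall>x\<in>Poly_Mapping.keys f. \<forall>y\<in>Poly_Mapping.keys f. ord x y \<longrightarrow> ord y x \<longrightarrow> x = y"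
    using ord_antisym by blast
  have "lpp ord f = x" unfolding lpp_def by (rule the_max_eq[OF x an])
  then show ?thesis using x by simp
qed

lemma lpp_eqI:
  fixes f :: "('x, 'k::zero) poly"
  assumes "t \<in> Poly_Mapping.keys f" "\<forall>s\<in>Poly_Mapping.keys f. ord s t"
  shows "lpp ord f = t"
proof -
  have an: "\<forall>x\<in>Poly_Mapping.keys f. \<forall>y\<in>Poly_Mapping.keys f. ord x y \<longrightarrow> ord y x \<longrightarrow> x = y"
    using ord_antisym by blast
  show ?thesis unfolding lpp_def by (rule the_max_eq[OF assms an])
qed

lemma lc_nonzero:
  fixes f :: "('x, 'k::zero) poly"
  assumes "f \<noteq> 0" shows "lc ord f \<noteq> 0"
  using lpp_prop[OF assms] by (simp add: lc_def in_keys_iff)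

lemma lpp_single_mult:
  fixes f :: "('x, 'k::field) poly"
  assumes c: "c \<noteq> 0" and f: "f \<noteq> 0"
  shows "Poly_Mapping.single u c * f \<noteq> 0 \<and> lpp ord (Poly_Mapping.single u c * f) = u + lpp ord f"
proof -
  have K: "Poly_Mapping.keys (Poly_Mapping.single u c * f) = (\<lambda>s. u + s) ` Poly_Mapping.keys f"
    by (rule keys_single_mult[OF c])
  have "lpp ord (Poly_Mapping.single u c * f) = u + lpp ord f"
  proof (rule lpp_eqI)
    show "u + lpp ord f \<in> Poly_Mapping.keys (Poly_Mapping.single u c * f)"
      using K lpp_prop[OF f] by blast
    show "\<forall>s\<in>Poly_Mapping.keys (Poly_Mapping.single u c * f). ord s (u + lpp ord f)"
    proof
      fix s assume "s \<in> Poly_Mapping.keys (Poly_Mapping.single u c * f)"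
      then obtain s' where s': "s = u + s'" "s' \<in> Poly_Mapping.keys f" using K by blast
      then have "ord s' (lpp ord f)" using lpp_prop[OF f] by blast
      then have "ord (s' + u) (lpp ord f + u)" by (rule ord_plus)
      then show "ord s (u + lpp ord f)" using s' by (simp add: add.commute)
    qed
  qed
  moreover have "Poly_Mapping.single u c * f \<noteq> 0" using single_mult_zero_iff[OF c] f by blast
  ultimately show ?thesis by blast
qed

lemma keys_diff_sub:
  fixes f g :: "('x, 'k::ab_group_add) poly"
  shows "Poly_Mapping.keys (f - g) \<subseteq> Poly_Mapping.keys f \<union> Poly_Mapping.keys g"
  by (auto simp: in_keys_iff lookup_minus)

lemma lpp_diff:
  fixes f g :: "('x, 'k::ab_group_add) poly"
  assumes f: "f \<noteq> 0" and g: "g = 0 \<or> (ord (lpp ord g) (lpp ord f) \<and> lpp ord g \<noteq> lpp ord f)"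
  shows "f - g \<noteq> 0 \<and> lpp ord (f - g) = lpp ord f"
proof -
  have g0: "Poly_Mapping.lookup g (lpp ord f) = 0"
  proof (rule ccontr)
    assume "Poly_Mapping.lookup g (lpp ord f) \<noteq> 0"
    then have k: "lpp ord f \<in> Poly_Mapping.keys g" by (simp add: in_keys_iff)
    then have "g \<noteq> 0" by auto
    then have "ord (lpp ord f) (lpp ord g)" using lpp_prop[of g] k by blast
    then show False using g \<open>g \<noteq> 0\<close> ord_antisym by blast
  qed
  have k: "lpp ord f \<in> Poly_Mapping.keys (f - g)"
    using lpp_prop[OF f] g0 by (simp add: in_keys_iff lookup_minus)
  have "lpp ord (f - g) = lpp ord f"
  proof (rule lpp_eqI[OF k], rule ballI)
    fix s assume "s \<in> Poly_Mapping.keys (f - g)"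
    then have "s \<in> Poly_Mapping.keys f \<or> s \<in> Poly_Mapping.keys g" using keys_diff_sub by blast
    then show "ord s (lpp ord f)"
    proof
      assume "s \<in> Poly_Mapping.keys f" then show ?thesis using lpp_prop[OF f] by blast
    next
      assume s: "s \<in> Poly_Mapping.keys g"
      then have "g \<noteq> 0" by auto
      then have "ord s (lpp ord g)" using lpp_prop[of g] s by blast
      then show ?thesis using g \<open>g \<noteq> 0\<close> ord_trans by blast
    qed
  qed
  moreover have "f - g \<noteq> 0" using k by auto
  ultimately show ?thesis by blast
qed

lemma lpp_uminus:
  fixes f :: "('x, 'k::ab_group_add) poly"
  shows "lpp ord (- f) = lpp ord f"
proof -
  have "Poly_Mapping.keys (- f) = Poly_Mapping.keys f" by (auto simp: in_keys_iff)
  then show ?thesis by (simp add: lpp_def)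
qed

lemma sig_Some:
  assumes "sig m mo u = Some T"
  shows "T \<in> msupp m u \<and> (\<forall>b\<in>msupp m u. mo b T)"
proof -
  have ne: "msupp m u \<noteq> {}" using assms by (auto simp: sig_def split: if_splits)
  have tot: "\<forall>x\<in>msupp m u. \<forall>y\<in>msupp m u. mo x y \<or> mo y x"
    using mo_total msupp_index by blast
  have tr: "\<forall>x\<in>msupp m u. \<forall>y\<in>msupp m u. \<forall>z\<in>msupp m u. mo x y \<longrightarrow> mo y z \<longrightarrow> mo x z"
    using mo_trans msupp_index by blast
  obtain x where x: "x \<in> msupp m u" "\<forall>y\<in>msupp m u. mo y x"
    using finite_max_ex[OF msupp_finite ne tot tr] by blast
  have an: "\<forall>x\<in>msupp m u. \<forall>y\<in>msupp m u. mo x y \<longrightarrow> mo y x \<longrightarrow> x = y"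
    using mo_antisym msupp_index by blast
  have "(THE a. a \<in> msupp m u \<and> (\<forall>b\<in>msupp m u. mo b a)) = x" by (rule the_max_eq[OF x an])
  then have "T = x" using assms ne by (simp add: sig_def)
  then show ?thesis using x by simp
qed

lemma sig_eqI:
  assumes "T \<in> msupp m u" "\<forall>b\<in>msupp m u. mo b T"
  shows "sig m mo u = Some T"
proof -
  have an: "\<forall>x\<in>msupp m u. \<forall>y\<in>msupp m u. mo x y \<longrightarrow> mo y x \<longrightarrow> x = y"
    using mo_antisym msupp_index by blast
  have "(THE a. a \<in> msupp m u \<and> (\<forall>b\<in>msupp m u. mo b a)) = T" by (rule the_max_eq[OF assms an])
  moreover have "msupp m u \<noteq> {}" using assms by blast
  ultimately show ?thesis by (simp add: sig_def)
qed

lemma sig_index: "sig m mo u = Some T \<Longrightarrow> snd T < m"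
  using sig_Some msupp_index by blast

definition valid :: "('x pp \<times> nat) option \<Rightarrow> bool" where
  "valid A \<longleftrightarrow> (\<forall>T. A = Some T \<longrightarrow> snd T < m)"

lemma valid_sig: "valid (sig m mo u)"
  using sig_index valid_def by blast

lemma valid_Some: "snd T < m \<Longrightarrow> valid (Some T)" and valid_None: "valid None"
  by (auto simp: valid_def)

lemma sig_less_trans:
  assumes "valid A" "valid B" "valid C" "sig_less mo A B" "sig_less mo B C"
  shows "sig_less mo A C"
proof (cases A)
  case None
  then show ?thesis using assms by (cases B; cases C) auto
next
  case (Some a)
  then obtain b c where b: "B = Some b" and c: "C = Some c" using assms by (cases B; cases C) auto
  have ia: "snd a < m" and ib: "snd b < m" and ic: "snd c < m" using assms Some b c by (auto simp: valid_def)
  have ab: "mo a b" "a \<noteq> b" and bc: "mo b c" "b \<noteq> c" using assms Some b c by auto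
  have "mo a c" using mo_trans[OF ia ib ic ab(1) bc(1)] .
  moreover have "a \<noteq> c" using mo_antisym[OF ib ic bc(1)] ab \<open>mo a c\<close> mo_trans[OF ib ic ia bc(1)] bc(2) by metis
  ultimately show ?thesis using Some c by simp
qed

lemma sig_less_asym:
  assumes "valid A" "valid B" "sig_less mo A B" shows "\<not> sig_less mo B A"
proof (cases A; cases B)
  fix a b assume "A = Some a" "B = Some b"
  then show ?thesis using assms mo_antisym by (auto simp: valid_def)
qed (use assms in auto)

lemma sig_less_irrefl: "\<not> sig_less mo A A"
  by (cases A) auto

lemma sig_less_total:
  assumes "valid A" "valid B" "A \<noteq> B" shows "sig_less mo A B \<or> sig_less mo B A"
proof (cases A; cases B)
  fix a b assume "A = Some a" "B = Some b"
  then show ?thesis using assms mo_total by (auto simp: valid_def)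
qed (use assms in auto)

lemma sig_le_less_trans:
  assumes "valid A" "valid B" "valid C" "\<not> sig_less mo A B" "sig_less mo A C"
  shows "sig_less mo B C"
proof (cases "A = B")
  case True then show ?thesis using assms by simp
next
  case False
  then have "sig_less mo B A" using sig_less_total assms by blast
  then show ?thesis using sig_less_trans assms by blast
qed

lemma msupp_scale:
  fixes u :: "('x, 'k::field) vec"
  assumes "c \<noteq> 0"
  shows "msupp m (\<lambda>i. Poly_Mapping.single t c * u i) = shft t ` msupp m u"
proof -
  have "\<And>i. Poly_Mapping.keys (Poly_Mapping.single t c * u i) = (\<lambda>s. t + s) ` Poly_Mapping.keys (u i)"
    using keys_single_mult[OF assms] by blast
  then show ?thesis by (force simp: msupp_def shft_def)
qed

lemma sig_scale:
  fixes u :: "('x, 'k::field) vec"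
  assumes c: "c \<noteq> 0"
  shows "sig m mo (\<lambda>i. Poly_Mapping.single t c * u i) = map_option (shft t) (sig m mo u)"
proof (cases "msupp m u = {}")
  case True
  have "sig m mo u = None" using True by (simp add: sig_None)
  moreover have "sig m mo (\<lambda>i. Poly_Mapping.single t c * u i) = None"
    using True msupp_scale[OF c] by (simp add: sig_None)
  ultimately show ?thesis by simp
next
  case False
  then obtain T where T: "sig m mo u = Some T" by (simp add: sig_def)
  have "sig m mo (\<lambda>i. Poly_Mapping.single t c * u i) = Some (shft t T)"
  proof (rule sig_eqI)
    show "shft t T \<in> msupp m (\<lambda>i. Poly_Mapping.single t c * u i)"
      using msupp_scale[OF c] sig_Some[OF T] by blast
    show "\<forall>b\<in>msupp m (\<lambda>i. Poly_Mapping.single t c * u i). mo b (shft t T)"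
    proof
      fix b assume "b \<in> msupp m (\<lambda>i. Poly_Mapping.single t c * u i)"
      then obtain b' where b': "b = shft t b'" "b' \<in> msupp m u" using msupp_scale[OF c] by blast
      then have "mo b' T" using sig_Some[OF T] by blast
      then show "mo b (shft t T)" using b' mo_shft msupp_index sig_index[OF T] by blast
    qed
  qed
  then show ?thesis using T by simp
qed

lemma sig_vmult:
  fixes u :: "('x, 'k::field) vec"
  shows "sig m mo (vmult t u) = map_option (shft t) (sig m mo u)"
  unfolding vmult_def by (rule sig_scale) simp

lemma sig_diff:
  fixes u v :: "('x, 'k::field) vec"
  assumes "sig_less mo (sig m mo v) (sig m mo u)"
  shows "sig m mo (\<lambda>i. u i - v i) = sig m mo u"
proof -
  obtain T where T: "sig m mo u = Some T" using assms by (cases "sig m mo u"; cases "sig m mo v") auto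
  have iT: "snd T < m" using sig_index[OF T] .
  have sub: "msupp m (\<lambda>i. u i - v i) \<subseteq> msupp m u \<union> msupp m v"
    using keys_diff_sub by (force simp: msupp_def)
  have notv: "T \<notin> msupp m v"
  proof
    assume Tv: "T \<in> msupp m v"
    then obtain S where S: "sig m mo v = Some S" by (cases "sig m mo v") (auto simp: sig_None)
    have "mo T S" using sig_Some[OF S] Tv by blast
    moreover have "mo S T" "S \<noteq> T" using assms T S by auto
    ultimately show False using mo_antisym iT sig_index[OF S] by blast
  qed
  have "sig m mo (\<lambda>i. u i - v i) = Some T"
  proof (rule sig_eqI)
    obtain t i where ti: "T = (t, i)" by (cases T)
    have "t \<in> Poly_Mapping.keys (u i)" "i < m" using sig_Some[OF T] ti by (auto simp: msupp_def)
    moreover have "t \<notin> Poly_Mapping.keys (v i)" using notv ti \<open>i < m\<close> by (auto simp: msupp_def)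
    ultimately show "T \<in> msupp m (\<lambda>i. u i - v i)" using ti by (auto simp: msupp_def in_keys_iff lookup_minus)
    show "\<forall>b\<in>msupp m (\<lambda>i. u i - v i). mo b T"
    proof
      fix b assume "b \<in> msupp m (\<lambda>i. u i - v i)"
      then have "b \<in> msupp m u \<or> b \<in> msupp m v" using sub by blast
      then show "mo b T"
      proof
        assume "b \<in> msupp m u" then show ?thesis using sig_Some[OF T] by blast
      next
        assume bv: "b \<in> msupp m v"
        then obtain S where S: "sig m mo v = Some S" by (cases "sig m mo v") (auto simp: sig_None)
        have "mo b S" using sig_Some[OF S] bv by blast
        moreover have "mo S T" using assms T S by auto
        ultimately show ?thesis using mo_trans msupp_index[OF bv] sig_index[OF S] iT by blast
      qed
    qed
  qed
  then show ?thesis using T by simp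
qed

lemma sig_cancel:
  fixes u v :: "('x, 'k::field) vec"
  assumes u: "sig m mo u = Some T" and v: "sig m mo v = Some T"
  shows "\<exists>c. c \<noteq> 0 \<and> sig_less mo (sig m mo (\<lambda>i. u i - Poly_Mapping.single 0 c * v i)) (Some T)"
proof -
  obtain t i where ti: "T = (t, i)" by (cases T)
  have ut: "Poly_Mapping.lookup (u i) t \<noteq> 0" and vt: "Poly_Mapping.lookup (v i) t \<noteq> 0"
    using sig_Some[OF u] sig_Some[OF v] ti by (auto simp: msupp_def in_keys_iff)
  define c where "c = Poly_Mapping.lookup (u i) t / Poly_Mapping.lookup (v i) t"
  have c0: "c \<noteq> 0" using ut vt by (simp add: c_def)
  define w where "w = (\<lambda>i. u i - Poly_Mapping.single 0 c * v i)"
  have sub: "msupp m w \<subseteq> msupp m u \<union> msupp m (\<lambda>i. Poly_Mapping.single 0 c * v i)"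
    unfolding w_def using keys_diff_sub by (force simp: msupp_def)
  have sub2: "msupp m (\<lambda>i. Poly_Mapping.single 0 c * v i) = msupp m v"
    using msupp_scale[OF c0, of 0 v] by (simp add: shft_def)
  have notT: "T \<notin> msupp m w"
  proof -
    have "Poly_Mapping.lookup (Poly_Mapping.single 0 c * v i) (0 + t) = c * Poly_Mapping.lookup (v i) t"
      by (rule lookup_single_mult_add)
    then have "Poly_Mapping.lookup (w i) t = 0" using vt by (simp add: w_def lookup_minus c_def)
    then show ?thesis using ti by (auto simp: msupp_def in_keys_iff)
  qed
  have all: "\<forall>b\<in>msupp m w. mo b T \<and> b \<noteq> T"
    using sub sub2 sig_Some[OF u] sig_Some[OF v] notT by blast
  have "sig_less mo (sig m mo w) (Some T)"
  proof (cases "msupp m w = {}")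
    case True
    then have "sig m mo w = None" by (simp add: sig_None)
    then show ?thesis by simp
  next
    case False
    then obtain S where S: "sig m mo w = Some S" by (simp add: sig_def)
    then show ?thesis using sig_Some[OF S] all by auto
  qed
  then show ?thesis using c0 unfolding w_def by blast
qed

end

lemma dot_diff:
  fixes u v :: "('x, 'k::comm_ring_1) vec"
  shows "dot m (\<lambda>i. u i - v i) fs = dot m u fs - dot m v fs"
  by (simp add: dot_def sum_subtractf left_diff_distrib)

lemma dot_scale:
  fixes u :: "('x, 'k::comm_ring_1) vec"
  shows "dot m (\<lambda>i. Poly_Mapping.single t c * u i) fs = Poly_Mapping.single t c * dot m u fs"
  by (simp add: dot_def sum_distrib_left mult.assoc)

lemma in_I_lsub: "in_I m fs a \<Longrightarrow> in_I m fs b \<Longrightarrow> in_I m fs (lsub a b)"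
  by (simp add: in_I_def lsub_def is_vec_def dot_diff)

lemma in_I_lscale: "in_I m fs a \<Longrightarrow> in_I m fs (lscale c t a)"
  by (simp add: in_I_def lscale_def is_vec_def dot_scale)

lemma in_I_msupp: "in_I m fs a \<Longrightarrow> fst a \<noteq> 0 \<Longrightarrow> msupp m (snd a) \<noteq> {}"
proof
  assume I: "in_I m fs a" and f: "fst a \<noteq> 0" and e: "msupp m (snd a) = {}"
  have "\<forall>i<m. snd a i = 0"
  proof (intro allI impI)
    fix i assume "i < m"
    then have "Poly_Mapping.keys (snd a i) = {}" using e unfolding msupp_def by blast
    then show "snd a i = 0" by simp
  qed
  then have "dot m (snd a) fs = 0" by (simp add: dot_def)
  then show False using I f by (simp add: in_I_def)
qed

lemma nat_seq_mono_subseq: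
  fixes f :: "nat \<Rightarrow> nat"
  shows "\<exists>r::nat\<Rightarrow>nat. strict_mono r \<and> (\<forall>a b. a \<le> b \<longrightarrow> f (r a) \<le> f (r b))"
proof -
  obtain r where r: "strict_mono r" "monoseq (\<lambda>n. f (r n))" using seq_monosub by blast
  show ?thesis
  proof (cases "\<forall>a. \<forall>b\<ge>a. f (r a) \<le> f (r b)")
    case True then show ?thesis using r(1) by blast
  next
    case False
    then have dec: "\<forall>a. \<forall>b\<ge>a. f (r b) \<le> f (r a)" using r(2) unfolding monoseq_def by blast
    define v where "v = (LEAST v. v \<in> range (\<lambda>n. f (r n)))"
    have "v \<in> range (\<lambda>n. f (r n))" unfolding v_def by (rule LeastI) blast
    then obtain n0 where n0: "f (r n0) = v" by blast
    have low: "\<And>n. v \<le> f (r n)" unfolding v_def by (rule Least_le) blast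
    have const: "\<And>n. f (r (n + n0)) = v"
      using dec n0 low by (metis le_add2 le_antisym)
    have "strict_mono (\<lambda>n. r (n + n0))"
      using r(1) by (simp add: strict_mono_def)
    then show ?thesis using const by (intro exI[of _ "\<lambda>n. r (n + n0)"]) simp
  qed
qed

lemma dickson_aux:
  fixes s :: "nat \<Rightarrow> ('x \<Rightarrow>\<^sub>0 nat)"
  assumes "finite X"
  shows "\<exists>r::nat\<Rightarrow>nat. strict_mono r \<and> (\<forall>x\<in>X. \<forall>a b. a \<le> b \<longrightarrow>
            Poly_Mapping.lookup (s (r a)) x \<le> Poly_Mapping.lookup (s (r b)) x)"
  using assms
proof (induction X rule: finite_induct)
  case empty
  have "strict_mono (\<lambda>n::nat. n)" by (simp add: strict_mono_def)
  then show ?case by (intro exI[of _ "\<lambda>n::nat. n"]) simp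
next
  case (insert x X)
  from insert.IH obtain r :: "nat \<Rightarrow> nat" where r: "strict_mono r" "\<forall>y\<in>X. \<forall>a b. a \<le> b \<longrightarrow>
            Poly_Mapping.lookup (s (r a)) y \<le> Poly_Mapping.lookup (s (r b)) y" by (elim exE conjE)
  obtain r2 :: "nat \<Rightarrow> nat" where r2: "strict_mono r2"
    "\<forall>a b. a \<le> b \<longrightarrow> Poly_Mapping.lookup (s (r (r2 a))) x \<le> Poly_Mapping.lookup (s (r (r2 b))) x"
    using nat_seq_mono_subseq[of "\<lambda>n. Poly_Mapping.lookup (s (r n)) x"] by (elim exE conjE)
  have sm: "strict_mono (\<lambda>n. r (r2 n))" by (rule strict_mono_compose[OF r(1) r2(1)])
  have "\<forall>y\<in>insert x X. \<forall>a b. a \<le> b \<longrightarrow>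
            Poly_Mapping.lookup (s (r (r2 a))) y \<le> Poly_Mapping.lookup (s (r (r2 b))) y"
  proof (intro ballI allI impI)
    fix y a b assume y: "y \<in> insert x X" and ab: "(a::nat) \<le> b"
    show "Poly_Mapping.lookup (s (r (r2 a))) y \<le> Poly_Mapping.lookup (s (r (r2 b))) y"
    proof (cases "y = x")
      case True then show ?thesis using r2(2) ab by simp
    next
      case False
      then have yX: "y \<in> X" using y by simp
      have "r2 a \<le> r2 b" using r2(1) ab by (simp add: strict_mono_less_eq)
      then show ?thesis using r(2) yX by simp
    qed
  qed
  then show ?case using sm by (intro exI[of _ "\<lambda>n. r (r2 n)"]) simp
qed

lemma dickson:
  fixes s :: "nat \<Rightarrow> ('x::finite \<Rightarrow>\<^sub>0 nat)"
  shows "\<exists>i j. i < j \<and> pp_dvd (s i) (s j)"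
proof -
  obtain r :: "nat \<Rightarrow> nat" where r: "strict_mono r" "\<forall>x\<in>UNIV. \<forall>a b. a \<le> b \<longrightarrow>
            Poly_Mapping.lookup (s (r a)) x \<le> Poly_Mapping.lookup (s (r b)) x"
    using dickson_aux[of UNIV s] by auto
  have "r 0 < r 1" using r(1) by (simp add: strict_mono_def)
  moreover have "pp_dvd (s (r 0)) (s (r 1))" using r(2) by (simp add: pp_dvd_def)
  ultimately show ?thesis by blast
qed

context agc_ord
begin

definition mrel :: "(('x pp \<times> nat) \<times> ('x pp \<times> nat)) set" where
  "mrel = {(S, T). snd S < m \<and> snd T < m \<and> mo S T \<and> S \<noteq> T}"

lemma wf_mrel: "wf mrel"
proof -
  have "\<not> (\<exists>f. \<forall>i. (f (Suc i), f i) \<in> mrel)"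
  proof
    assume "\<exists>f. \<forall>i. (f (Suc i), f i) \<in> mrel"
    then obtain f where f: "\<forall>i. (f (Suc i), f i) \<in> mrel" by blast
    have idx: "\<And>i. snd (f i) < m" using f by (simp add: mrel_def)
    have step: "\<And>i. mo (f (Suc i)) (f i) \<and> f (Suc i) \<noteq> f i" using f by (simp add: mrel_def)
    have desc: "\<And>i j. i < j \<Longrightarrow> mo (f j) (f i) \<and> f j \<noteq> f i"
    proof -
      fix i j :: nat assume "i < j"
      then show "mo (f j) (f i) \<and> f j \<noteq> f i"
      proof (induction j)
        case 0 then show ?case by simp
      next
        case (Suc j)
        show ?case
        proof (cases "i = j")
          case True then show ?thesis using step by simp
        next
          case False
          then have ij: "mo (f j) (f i)" "f j \<noteq> f i" using Suc by auto
          have a: "mo (f (Suc j)) (f i)" using mo_trans[OF idx idx idx step[THEN conjunct1] ij(1)] .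
          have "f (Suc j) \<noteq> f i"
          proof
            assume e: "f (Suc j) = f i"
            then have "mo (f i) (f j)" using step by metis
            then show False using mo_antisym[OF idx idx] ij by blast
          qed
          then show ?thesis using a by blast
        qed
      qed
    qed
    have "UNIV = (\<Union>k\<in>{..<m}. {n. snd (f n) = k})" using idx by auto
    have "\<exists>k\<in>{..<m}. infinite {n. snd (f n) = k}"
    proof (rule ccontr)
      assume "\<not> (\<exists>k\<in>{..<m}. infinite {n. snd (f n) = k})"
      then have "finite (\<Union>k\<in>{..<m}. {n. snd (f n) = k})" by (intro finite_UN_I) auto
      then show False using \<open>UNIV = _\<close> by (metis infinite_UNIV_nat)
    qed
    then obtain k where k: "infinite {n. snd (f n) = k}" by blast
    obtain r :: "nat \<Rightarrow> nat" where r: "strict_mono r" "\<forall>n. r n \<in> {n. snd (f n) = k}"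
      using infinite_enumerate[OF k] by blast
    obtain i j where ij: "i < j" "pp_dvd (fst (f (r i))) (fst (f (r j)))"
      using dickson[of "\<lambda>n. fst (f (r n))"] by blast
    have "mdvd (f (r i)) (f (r j))" using ij r(2) by (simp add: mdvd_def)
    then have m1: "mo (f (r i)) (f (r j))" by (rule mdvd_mo[OF idx])
    have "r i < r j" using r(1) ij(1) by (simp add: strict_mono_def)
    then have m2: "mo (f (r j)) (f (r i))" and ne: "f (r j) \<noteq> f (r i)" using desc by blast+
    have "f (r i) = f (r j)" by (rule mo_antisym[OF idx idx m1 m2])
    then show False using ne by simp
  qed
  then show ?thesis using wf_iff_no_infinite_down_chain by blast
qed

end

lemma gen_rewritable_mono:
  "B \<subseteq> B' \<Longrightarrow> gen_rewritable m mo lt B t a \<Longrightarrow> gen_rewritable m mo lt B' t a"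
  unfolding gen_rewritable_def by blast

lemma cpair_gen_rewritable_mono:
  assumes "B \<subseteq> B'" "cpair_gen_rewritable m mo lt B p"
  shows "cpair_gen_rewritable m mo lt B' p"
proof -
  obtain tf a tg b where p: "p = (tf, a, tg, b)" by (cases p) auto
  have "gen_rewritable m mo lt B tf a \<or> gen_rewritable m mo lt B tg b"
    using assms(2) unfolding p cpair_gen_rewritable_def by simp
  then have "gen_rewritable m mo lt B' tf a \<or> gen_rewritable m mo lt B' tg b"
    using gen_rewritable_mono[OF assms(1)] by blast
  then show ?thesis unfolding p cpair_gen_rewritable_def by simp
qed

lemma is_cpair_D:
  assumes "is_cpair ord m mo a b p"
  shows "fst a \<noteq> 0 \<and> fst b \<noteq> 0 \<and>
    p = (pp_div (pp_lcm (lpp ord (fst a)) (lpp ord (fst b))) (lpp ord (fst a)), a,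
         pp_div (pp_lcm (lpp ord (fst a)) (lpp ord (fst b))) (lpp ord (fst b)), b)"
  using assms unfolding is_cpair_def Let_def by blast

lemma is_cpair_same_not_regular:
  assumes "is_cpair ord m mo a a p" shows "\<not> regular_cpair m mo p"
proof -
  have "\<And>X. \<not> sig_less mo X X" by (case_tac X) simp_all
  then show ?thesis using is_cpair_D[OF assms] by (simp add: regular_cpair_def)
qed

lemma in_I_G_init:
  fixes fs :: "('x, 'k::comm_ring_1) vec"
  shows "g \<in> G_init m fs \<Longrightarrow> in_I m fs g"
proof (unfold G_init_def, elim UnE CollectE exE conjE)
  fix i assume g: "g = (fs i, unitv i)" and i: "i < m"
  have "dot m (unitv i) fs = (\<Sum>k<m. if k = i then fs k else 0)"
    unfolding dot_def unitv_def by (intro sum.cong) auto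
  also have "\<dots> = fs i" using i by simp
  finally show ?thesis using g i by (simp add: in_I_def is_vec_def unitv_def)
next
  fix i j assume g: "g = (0, \<lambda>k. (if k = i then fs j else 0) - (if k = j then fs i else 0))"
    and ij: "i < j" "j < m"
  have "dot m (\<lambda>k. (if k = i then fs j else 0) - (if k = j then fs i else 0)) fs
      = (\<Sum>k<m. (if k = i then fs j * fs k else 0) - (if k = j then fs i * fs k else 0))"
    unfolding dot_def by (rule sum.cong) (auto simp: left_diff_distrib)
  also have "\<dots> = (\<Sum>k<m. (if k = i then fs j * fs k else 0)) - (\<Sum>k<m. (if k = j then fs i * fs k else 0))"
    by (rule sum_subtractf)
  also have "\<dots> = fs j * fs i - fs i * fs j" using ij by simp
  also have "\<dots> = 0" by (simp add: mult.commute)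
  finally show ?thesis using g ij by (simp add: in_I_def is_vec_def)
qed

lemma finite_G_init: "finite (G_init m fs)"
proof -
  have A: "{(fs i, unitv i) | i. i < m} = (\<lambda>i. (fs i, unitv i)) ` {..<m}" by auto
  have fA: "finite {(fs i, unitv i) | i. i < m}" unfolding A by (rule finite_imageI) simp
  have sub: "{(0, \<lambda>k. (if k = i then fs j else 0) - (if k = j then fs i else 0)) | i j. i < j \<and> j < m}
     \<subseteq> (\<lambda>(i, j). (0, \<lambda>k. (if k = i then fs j else 0) - (if k = j then fs i else 0))) ` ({..<m} \<times> {..<m})"
    by force
  have "finite ((\<lambda>(i, j). (0, \<lambda>k. (if k = i then fs j else 0) - (if k = j then fs i else 0))) ` ({..<m} \<times> {..<m}))"
    by (rule finite_imageI) simp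
  then have fB: "finite {(0, \<lambda>k. (if k = i then fs j else 0) - (if k = j then fs i else 0)) | i j. i < j \<and> j < m}"
    by (rule finite_subset[OF sub])
  show ?thesis unfolding G_init_def using fA fB by (rule finite_UnI)
qed

lemma in_I_new_syz:
  fixes fs :: "('x, 'k::comm_ring_1) vec"
  assumes h: "in_I m fs h" and g: "g \<in> new_syz m fs h"
  shows "in_I m fs g"
proof -
  obtain i where g: "g = (0, \<lambda>k. (if k = i then fst h else 0) - fs i * snd h k)" and i: "i < m"
    using g by (auto simp: new_syz_def)
  have vec: "\<forall>k\<ge>m. snd h k = 0" using h by (simp add: in_I_def is_vec_def)
  have "dot m (\<lambda>k. (if k = i then fst h else 0) - fs i * snd h k) fs
     = (\<Sum>k<m. (if k = i then fst h * fs k else 0) - fs i * (snd h k * fs k))"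
    unfolding dot_def by (rule sum.cong) (auto simp: left_diff_distrib mult.assoc)
  also have "\<dots> = (\<Sum>k<m. (if k = i then fst h * fs k else 0)) - (\<Sum>k<m. fs i * (snd h k * fs k))"
    by (rule sum_subtractf)
  also have "\<dots> = (\<Sum>k<m. (if k = i then fst h * fs k else 0)) - fs i * (\<Sum>k<m. snd h k * fs k)"
    by (simp add: sum_distrib_left)
  also have "\<dots> = fst h * fs i - fs i * fst h" using i h by (simp add: in_I_def dot_def)
  also have "\<dots> = 0" by (simp add: mult.commute)
  finally show ?thesis using g i vec by (simp add: in_I_def is_vec_def)
qed

lemma finite_new_syz: "finite (new_syz m fs h)"
proof -
  have "new_syz m fs h = (\<lambda>i. (0, \<lambda>k. (if k = i then fst h else 0) - fs i * snd h k)) ` {..<m}"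
    by (auto simp: new_syz_def)
  then show ?thesis by simp
qed

lemma fst_new_syz: "g \<in> new_syz m fs h \<Longrightarrow> fst g = 0"
  by (auto simp: new_syz_def)

lemma in_I_red1:
  assumes "red1 ord m mo G a a'" "\<forall>g\<in>G. in_I m fs g" "in_I m fs a"
  shows "in_I m fs a'"
  using assms unfolding red1_def Let_def by (auto intro: in_I_lsub in_I_lscale)

lemma in_I_red:
  assumes "(red1 ord m mo G)\<^sup>*\<^sup>* a a'" "\<forall>g\<in>G. in_I m fs g" "in_I m fs a"
  shows "in_I m fs a'"
  using assms by (induction rule: rtranclp_induct) (auto intro: in_I_red1)

lemma in_I_spoly:
  assumes "is_cpair ord m mo a b p" "in_I m fs a" "in_I m fs b"
  shows "in_I m fs (spoly ord p)"
  using is_cpair_D[OF assms(1)] assms(2,3)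
  by (auto simp: spoly_def intro!: in_I_lsub in_I_lscale)

context agc_ord
begin

lemma sig_red1:
  fixes a :: "('x, 'k::field) lpoly"
  assumes "red1 ord m mo G a a'"
  shows "sig m mo (snd a') = sig m mo (snd a)"
proof -
  obtain h where h: "h \<in> G" "fst a \<noteq> 0" "fst h \<noteq> 0"
    and sl: "sig_less mo (sig m mo (vmult (pp_div (lpp ord (fst a)) (lpp ord (fst h))) (snd h))) (sig m mo (snd a))"
    and a': "a' = lsub a (lscale (lc ord (fst a) / lc ord (fst h)) (pp_div (lpp ord (fst a)) (lpp ord (fst h))) h)"
    using assms unfolding red1_def Let_def by blast
  define t where "t = pp_div (lpp ord (fst a)) (lpp ord (fst h))"
  define c where "c = lc ord (fst a) / lc ord (fst h)"
  have c: "c \<noteq> 0" using lc_nonzero[OF h(2)] lc_nonzero[OF h(3)] by (simp add: c_def)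
  have "sig m mo (\<lambda>i. Poly_Mapping.single t c * snd h i) = map_option (shft t) (sig m mo (snd h))"
    by (rule sig_scale[OF c])
  also have "\<dots> = sig m mo (vmult t (snd h))" by (rule sig_vmult[symmetric])
  finally have "sig m mo (\<lambda>i. Poly_Mapping.single t c * snd h i) = sig m mo (vmult t (snd h))" .
  then have "sig_less mo (sig m mo (\<lambda>i. Poly_Mapping.single t c * snd h i)) (sig m mo (snd a))"
    using sl by (simp add: t_def)
  then have "sig m mo (\<lambda>i. snd a i - Poly_Mapping.single t c * snd h i) = sig m mo (snd a)"
    by (rule sig_diff)
  then show ?thesis using a' by (simp add: snd_lsub snd_lscale t_def c_def)
qed

lemma sig_red:
  fixes a :: "('x, 'k::field) lpoly"
  assumes "(red1 ord m mo G)\<^sup>*\<^sup>* a a'"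
  shows "sig m mo (snd a') = sig m mo (snd a)"
  using assms by (induction rule: rtranclp_induct) (auto dest: sig_red1)

lemma sig_spoly:
  fixes a :: "('x, 'k::field) lpoly"
  assumes "is_cpair ord m mo a b p" "regular_cpair m mo p"
  shows "sig m mo (snd (spoly ord p)) = sig m mo (vmult (fst p) (snd a))"
proof -
  define tf where "tf = pp_div (pp_lcm (lpp ord (fst a)) (lpp ord (fst b))) (lpp ord (fst a))"
  define tg where "tg = pp_div (pp_lcm (lpp ord (fst a)) (lpp ord (fst b))) (lpp ord (fst b))"
  have p: "p = (tf, a, tg, b)" and a0: "fst a \<noteq> 0" and b0: "fst b \<noteq> 0"
    using is_cpair_D[OF assms(1)] by (simp_all add: tf_def tg_def)
  define c where "c = lc ord (fst a) / lc ord (fst b)"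
  have c: "c \<noteq> 0" using lc_nonzero[OF a0] lc_nonzero[OF b0] by (simp add: c_def)
  have reg: "sig_less mo (sig m mo (vmult tg (snd b))) (sig m mo (vmult tf (snd a)))"
    using assms(2) p by (simp add: regular_cpair_def)
  have "sig m mo (\<lambda>i. Poly_Mapping.single tg c * snd b i) = map_option (shft tg) (sig m mo (snd b))"
    by (rule sig_scale[OF c])
  also have "\<dots> = sig m mo (vmult tg (snd b))" by (rule sig_vmult[symmetric])
  finally have "sig m mo (\<lambda>i. Poly_Mapping.single tg c * snd b i) = sig m mo (vmult tg (snd b))" .
  then have "sig_less mo (sig m mo (\<lambda>i. Poly_Mapping.single tg c * snd b i)) (sig m mo (vmult tf (snd a)))"
    using reg by simp
  then have "sig m mo (\<lambda>i. vmult tf (snd a) i - Poly_Mapping.single tg c * snd b i) = sig m mo (vmult tf (snd a))"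
    by (rule sig_diff)
  then show ?thesis using p
    by (simp add: spoly_def snd_lsub snd_lscale c_def vmult_def)
qed

end

locale agc_loc = agc_ord ord mo m
  for ord :: "('x::finite) pp \<Rightarrow> 'x pp \<Rightarrow> bool"
    and mo :: "'x pp \<times> nat \<Rightarrow> 'x pp \<times> nat \<Rightarrow> bool"
    and m :: nat +
  fixes fs :: "('x, 'k::field) vec"
    and lt :: "('x, 'k) lpoly \<Rightarrow> ('x, 'k) lpoly \<Rightarrow> bool"
    and N :: nat
    and Gs :: "nat \<Rightarrow> ('x, 'k) lpoly set"
    and CPs :: "nat \<Rightarrow> ('x, 'k) cpair set"
    and ps :: "nat \<Rightarrow> ('x, 'k) cpair"
    and rs :: "nat \<Rightarrow> ('x, 'k) lpoly option"
  assumes run: "agc_run ord m mo fs lt N Gs CPs ps rs"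
    and po: "strict_po_on (Gs N) lt"
    and adm: "admissible_run N lt ps rs"
begin

lemma G0: "Gs 0 = G_init m fs" and CP0: "CPs 0 = cpairs_of ord m mo (G_init m fs) (G_init m fs)"
  and CPN: "CPs N = {}"
  using run by (simp_all add: agc_run_def)

lemma stepk: "k < N \<Longrightarrow> agc_step ord m mo fs lt (Gs k) (CPs k) (ps k) (rs k) (Gs (Suc k)) (CPs (Suc k))"
  using run by (simp add: agc_run_def)

lemma Gs_step: "k < N \<Longrightarrow> Gs k \<subseteq> Gs (Suc k)"
  using stepk[of k] unfolding agc_step_def by (auto split: if_splits)

lemma CPs_step: "k < N \<Longrightarrow> CPs k - {ps k} \<subseteq> CPs (Suc k)"
  using stepk[of k] unfolding agc_step_def by (auto split: if_splits)

lemma ps_in: "k < N \<Longrightarrow> ps k \<in> CPs k"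
  using stepk[of k] unfolding agc_step_def by blast

lemma Gs_mono: "j \<le> j' \<Longrightarrow> j' \<le> N \<Longrightarrow> Gs j \<subseteq> Gs j'"
proof (induction j')
  case 0 then show ?case by simp
next
  case (Suc j')
  show ?case
  proof (cases "j = Suc j'")
    case True then show ?thesis by simp
  next
    case False
    then have "Gs j \<subseteq> Gs j'" using Suc by simp
    then show ?thesis using Gs_step[of j'] Suc.prems by simp
  qed
qed

lemma processed: "j \<le> N \<Longrightarrow> p \<in> CPs j \<Longrightarrow> \<exists>k. j \<le> k \<and> k < N \<and> ps k = p"
proof (induction "N - j" arbitrary: j)
  case 0
  then have "j = N" by simp
  then show ?case using CPN 0 by simp
next
  case (Suc d)
  then have jN: "j < N" by simp
  show ?case
  proof (cases "ps j = p")
    case True then show ?thesis using jN by blast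
  next
    case False
    then have "p \<in> CPs (Suc j)" using CPs_step[OF jN] Suc.prems by blast
    moreover have "d = N - Suc j" using Suc.hyps by simp
    ultimately obtain k where "Suc j \<le> k" "k < N" "ps k = p" using Suc.hyps(1) jN by fastforce
    then show ?thesis by (intro exI[of _ k]) simp
  qed
qed

lemma invariants:
  "k \<le> N \<Longrightarrow> (\<forall>g\<in>Gs k. in_I m fs g) \<and> finite (Gs k) \<and>
     (\<forall>p\<in>CPs k. \<exists>a\<in>Gs k. \<exists>b\<in>Gs k. is_cpair ord m mo a b p)"
proof (induction k)
  case 0
  show ?case using G0 CP0 in_I_G_init finite_G_init by (auto simp: cpairs_of_def)
next
  case (Suc k)
  then have kN: "k < N" by simp
  have IH: "\<forall>g\<in>Gs k. in_I m fs g" "finite (Gs k)"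
    "\<forall>p\<in>CPs k. \<exists>a\<in>Gs k. \<exists>b\<in>Gs k. is_cpair ord m mo a b p"
    using Suc by auto
  have st: "agc_step ord m mo fs lt (Gs k) (CPs k) (ps k) (rs k) (Gs (Suc k)) (CPs (Suc k))"
    by (rule stepk[OF kN])
  have pin: "ps k \<in> CPs k" using st unfolding agc_step_def by blast
  show ?case
  proof (cases "regular_cpair m mo (ps k) \<and> \<not> cpair_gen_rewritable m mo lt (Gs k) (ps k)")
    case True
    then obtain h where h: "reduces_to ord m mo (Gs k) (spoly ord (ps k)) h"
      "CPs (Suc k) = (CPs k - {ps k}) \<union> cpairs_of ord m mo {h} (Gs k) \<union> cpairs_of ord m mo (Gs k) {h}"
      "Gs (Suc k) = Gs k \<union> {h} \<union> new_syz m fs h"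
      using st unfolding agc_step_def by auto
    obtain a b where ab: "a \<in> Gs k" "b \<in> Gs k" "is_cpair ord m mo a b (ps k)" using IH(3) pin by blast
    have "in_I m fs (spoly ord (ps k))" using in_I_spoly[OF ab(3)] IH(1) ab by blast
    moreover have "(red1 ord m mo (Gs k))\<^sup>*\<^sup>* (spoly ord (ps k)) h" using h(1) by (simp add: reduces_to_def)
    ultimately have hI: "in_I m fs h" using in_I_red IH(1) by blast
    have 1: "\<forall>g\<in>Gs (Suc k). in_I m fs g" using h(3) IH(1) hI in_I_new_syz by blast
    have 2: "finite (Gs (Suc k))" using h(3) IH(2) finite_new_syz by simp
    have 3: "\<forall>p\<in>CPs (Suc k). \<exists>a\<in>Gs (Suc k). \<exists>b\<in>Gs (Suc k). is_cpair ord m mo a b p"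
    proof
      fix p assume "p \<in> CPs (Suc k)"
      then have "p \<in> CPs k \<or> p \<in> cpairs_of ord m mo {h} (Gs k) \<or> p \<in> cpairs_of ord m mo (Gs k) {h}"
        using h(2) by blast
      then show "\<exists>a\<in>Gs (Suc k). \<exists>b\<in>Gs (Suc k). is_cpair ord m mo a b p"
        using IH(3) h(3) unfolding cpairs_of_def by blast
    qed
    show ?thesis using 1 2 3 by blast
  next
    case False
    then have "Gs (Suc k) = Gs k" "CPs (Suc k) = CPs k - {ps k}"
      using st unfolding agc_step_def by auto
    then show ?thesis using IH by auto
  qed
qed

lemma GN_in_I: "\<forall>g\<in>Gs N. in_I m fs g" and GN_finite: "finite (Gs N)"
  using invariants[of N] by auto

lemma rs_in: "k < N \<Longrightarrow> rs k = Some h \<Longrightarrow> h \<in> Gs (Suc k)"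
proof -
  assume kN: "k < N" and r: "rs k = Some h"
  have st: "agc_step ord m mo fs lt (Gs k) (CPs k) (ps k) (rs k) (Gs (Suc k)) (CPs (Suc k))"
    by (rule stepk[OF kN])
  show ?thesis
  proof (cases "regular_cpair m mo (ps k) \<and> \<not> cpair_gen_rewritable m mo lt (Gs k) (ps k)")
    case True
    then obtain h' where "rs k = Some h'" "Gs (Suc k) = Gs k \<union> {h'} \<union> new_syz m fs h'"
      using st unfolding agc_step_def by auto
    then show ?thesis using r by simp
  next
    case False
    then have "rs k = None" using st unfolding agc_step_def by auto
    then show ?thesis using r by simp
  qed
qed

lemma entry:
  assumes x: "x \<in> Gs N" "fst x \<noteq> 0"
  shows "x \<in> Gs 0 \<or> (\<exists>k<N. x \<notin> Gs k \<and> rs k = Some x \<and>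
     (\<forall>b\<in>Gs k. \<forall>p. (is_cpair ord m mo x b p \<or> is_cpair ord m mo b x p) \<longrightarrow> p \<in> CPs (Suc k)))"
proof -
  define j where "j = (LEAST j. x \<in> Gs j)"
  have xj: "x \<in> Gs j" unfolding j_def by (rule LeastI[of _ N]) (rule x(1))
  have jN: "j \<le> N" unfolding j_def by (rule Least_le) (rule x(1))
  show ?thesis
  proof (cases j)
    case 0 then show ?thesis using xj by simp
  next
    case (Suc k)
    have nk: "x \<notin> Gs k" using not_less_Least[of k "\<lambda>j. x \<in> Gs j"] Suc unfolding j_def by simp
    have kN: "k < N" using jN Suc by simp
    have st: "agc_step ord m mo fs lt (Gs k) (CPs k) (ps k) (rs k) (Gs (Suc k)) (CPs (Suc k))"
      by (rule stepk[OF kN])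
    show ?thesis
    proof (cases "regular_cpair m mo (ps k) \<and> \<not> cpair_gen_rewritable m mo lt (Gs k) (ps k)")
      case True
      then obtain h where h: "rs k = Some h"
        "CPs (Suc k) = (CPs k - {ps k}) \<union> cpairs_of ord m mo {h} (Gs k) \<union> cpairs_of ord m mo (Gs k) {h}"
        "Gs (Suc k) = Gs k \<union> {h} \<union> new_syz m fs h"
        using st unfolding agc_step_def by auto
      have "x = h" using xj Suc h(3) nk fst_new_syz x(2) by blast
      then have "\<forall>b\<in>Gs k. \<forall>p. (is_cpair ord m mo x b p \<or> is_cpair ord m mo b x p) \<longrightarrow> p \<in> CPs (Suc k)"
        using h(2) unfolding cpairs_of_def by blast
      then show ?thesis using kN nk h(1) \<open>x = h\<close> by blast
    next
      case False
      then have "Gs (Suc k) = Gs k" using st unfolding agc_step_def by auto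
      then show ?thesis using xj Suc nk by simp
    qed
  qed
qed

lemma pair_in_CP:
  assumes a: "a \<in> Gs N" and b: "b \<in> Gs N" and p: "is_cpair ord m mo a b p"
    and reg: "regular_cpair m mo p"
  shows "\<exists>j\<le>N. p \<in> CPs j"
proof -
  have a0: "fst a \<noteq> 0" and b0: "fst b \<noteq> 0" using is_cpair_D[OF p] by auto
  have ab: "a \<noteq> b" using p reg is_cpair_same_not_regular by blast
  note ea = entry[OF a a0] and eb = entry[OF b b0]
  show ?thesis
  proof (cases "a \<in> Gs 0")
    case a00: True
    show ?thesis
    proof (cases "b \<in> Gs 0")
      case True
      then have "p \<in> CPs 0" using a00 p G0 CP0 unfolding cpairs_of_def by blast
      then show ?thesis by blast
    next
      case False
      then obtain k where k: "k < N" "rs k = Some b"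
        "\<forall>b'\<in>Gs k. \<forall>p. (is_cpair ord m mo b b' p \<or> is_cpair ord m mo b' b p) \<longrightarrow> p \<in> CPs (Suc k)"
        using eb by blast
      have "Gs 0 \<subseteq> Gs k" using Gs_mono[of 0 k] k(1) by simp
      then have "a \<in> Gs k" using a00 by blast
      then have "\<forall>p. (is_cpair ord m mo b a p \<or> is_cpair ord m mo a b p) \<longrightarrow> p \<in> CPs (Suc k)" using k(3) by blast
      then have "p \<in> CPs (Suc k)" using p by blast
      then show ?thesis using k(1) by (intro exI[of _ "Suc k"]) simp
    qed
  next
    case a0F: False
    then obtain ka where ka: "ka < N" "a \<notin> Gs ka" "rs ka = Some a"
        "\<forall>b'\<in>Gs ka. \<forall>p. (is_cpair ord m mo a b' p \<or> is_cpair ord m mo b' a p) \<longrightarrow> p \<in> CPs (Suc ka)"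
      using ea by blast
    have aS: "a \<in> Gs (Suc ka)" by (rule rs_in[OF ka(1) ka(3)])
    show ?thesis
    proof (cases "b \<in> Gs ka")
      case True
      then have "\<forall>p. (is_cpair ord m mo a b p \<or> is_cpair ord m mo b a p) \<longrightarrow> p \<in> CPs (Suc ka)" using ka(4) by blast
      then have "p \<in> CPs (Suc ka)" using p by blast
      then show ?thesis using ka(1) by (intro exI[of _ "Suc ka"]) simp
    next
      case bF: False
      have "Gs 0 \<subseteq> Gs ka" using Gs_mono[of 0 ka] ka(1) by simp
      then have "b \<notin> Gs 0" using bF by blast
      then obtain kb where kb: "kb < N" "b \<notin> Gs kb" "rs kb = Some b"
        "\<forall>b'\<in>Gs kb. \<forall>p. (is_cpair ord m mo b b' p \<or> is_cpair ord m mo b' b p) \<longrightarrow> p \<in> CPs (Suc kb)"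
        using eb by blast
      have "kb \<noteq> ka" using kb(3) ka(3) ab by auto
      moreover have "\<not> kb < ka"
      proof
        assume "kb < ka"
        have bS: "b \<in> Gs (Suc kb)" by (rule rs_in[OF kb(1) kb(3)])
        have "Gs (Suc kb) \<subseteq> Gs ka" using Gs_mono[of "Suc kb" ka] \<open>kb < ka\<close> ka(1) by simp
        then show False using bS bF by blast
      qed
      ultimately have "ka < kb" by simp
      then have "Gs (Suc ka) \<subseteq> Gs kb" using Gs_mono[of "Suc ka" kb] kb(1) by simp
      then have "a \<in> Gs kb" using aS by blast
      then have "\<forall>p. (is_cpair ord m mo b a p \<or> is_cpair ord m mo a b p) \<longrightarrow> p \<in> CPs (Suc kb)" using kb(4) by blast
      then have "p \<in> CPs (Suc kb)" using p by blast
      then show ?thesis using kb(1) by (intro exI[of _ "Suc kb"]) simp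
    qed
  qed
qed

lemma pair_reduced:
  assumes a: "a \<in> Gs N" and b: "b \<in> Gs N" and p: "is_cpair ord m mo a b p"
    and reg: "regular_cpair m mo p" and nr: "\<not> cpair_gen_rewritable m mo lt (Gs N) p"
  shows "\<exists>h. h \<in> Gs N \<and> lt h a \<and> sig m mo (snd h) = sig m mo (vmult (fst p) (snd a))"
proof -
  obtain j where j: "j \<le> N" "p \<in> CPs j" using pair_in_CP[OF a b p reg] by blast
  obtain k where k: "j \<le> k" "k < N" "ps k = p" using processed[OF j] by blast
  have st: "agc_step ord m mo fs lt (Gs k) (CPs k) (ps k) (rs k) (Gs (Suc k)) (CPs (Suc k))"
    by (rule stepk[OF k(2)])
  have "Gs k \<subseteq> Gs N" using Gs_mono k(2) by simp
  then have "\<not> cpair_gen_rewritable m mo lt (Gs k) p"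
    using nr cpair_gen_rewritable_mono by blast
  then obtain h where h: "rs k = Some h" "reduces_to ord m mo (Gs k) (spoly ord p) h"
      "Gs (Suc k) = Gs k \<union> {h} \<union> new_syz m fs h"
    using st reg k(3) unfolding agc_step_def by auto
  have "Gs (Suc k) \<subseteq> Gs N" using Gs_mono[of "Suc k" N] k(2) by simp
  then have hN: "h \<in> Gs N" using h(3) by blast
  have "\<forall>h. rs k = Some h \<longrightarrow> lt h (fst (snd (ps k)))" using adm k(2) unfolding admissible_run_def by blast
  then have "lt h (fst (snd (ps k)))" using h(1) by blast
  moreover have "fst (snd p) = a" using is_cpair_D[OF p] by simp
  ultimately have lt: "lt h a" using k(3) by simp
  have "(red1 ord m mo (Gs k))\<^sup>*\<^sup>* (spoly ord p) h" using h(2) by (simp add: reduces_to_def)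
  then have "sig m mo (snd h) = sig m mo (snd (spoly ord p))" by (rule sig_red)
  also have "\<dots> = sig m mo (vmult (fst p) (snd a))" by (rule sig_spoly[OF p reg])
  finally show ?thesis using hN lt by blast
qed

end

context agc_loc
begin

definition nonrew :: "('x pp \<times> nat) \<Rightarrow> ('x, 'k) lpoly \<Rightarrow> bool" where
  "nonrew T g \<longleftrightarrow> g \<in> Gs N \<and> (\<exists>M. sig m mo (snd g) = Some M \<and> mdvd M T) \<and>
     \<not> (\<exists>g'\<in>Gs N. \<exists>M'. sig m mo (snd g') = Some M' \<and> mdvd M' T \<and> lt g' g)"

definition red_below :: "('x, 'k) lpoly \<Rightarrow> ('x pp \<times> nat) \<Rightarrow> bool" where
  "red_below x S \<longleftrightarrow> (\<exists>g\<in>Gs N. fst g \<noteq> 0 \<and> pp_dvd (lpp ord (fst g)) (lpp ord (fst x)) \<and>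
     sig_less mo (sig m mo (vmult (pp_div (lpp ord (fst x)) (lpp ord (fst g))) (snd g))) (Some S))"

definition topred :: "('x, 'k) lpoly \<Rightarrow> bool" where
  "topred x \<longleftrightarrow> fst x \<noteq> 0 \<and> (\<exists>S. sig m mo (snd x) = Some S \<and> red_below x S)"

definition Cov :: "('x pp \<times> nat) \<Rightarrow> bool" where
  "Cov T \<longleftrightarrow> (\<forall>a. in_I m fs a \<and> fst a \<noteq> 0 \<and> sig m mo (snd a) = Some T \<longrightarrow>
     (\<exists>g\<in>Gs N. fst g \<noteq> 0 \<and> pp_dvd (lpp ord (fst g)) (lpp ord (fst a)) \<and>
        \<not> sig_less mo (Some T) (sig m mo (vmult (pp_div (lpp ord (fst a)) (lpp ord (fst g))) (snd g)))))"

definition Crit :: "('x pp \<times> nat) \<Rightarrow> bool" where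
  "Crit T \<longleftrightarrow> (\<forall>g t. nonrew T g \<and> sig m mo (vmult t (snd g)) = Some T \<and> fst g \<noteq> 0 \<longrightarrow>
     \<not> topred (lscale 1 t g))"

lemma sig_unitv:
  assumes i: "i < m"
  shows "sig m mo (unitv i :: ('x, 'k) vec) = Some (0, i)"
proof -
  have ms: "msupp m (unitv i :: ('x, 'k) vec) = {(0, i)}"
    using i by (auto simp: msupp_def unitv_def)
  show ?thesis
  proof (rule sig_eqI)
    show "(0, i) \<in> msupp m (unitv i :: ('x, 'k) vec)" using ms by simp
    show "\<forall>b\<in>msupp m (unitv i :: ('x, 'k) vec). mo b (0, i)" using ms mo_refl[of "(0, i)"] i by simp
  qed
qed

lemma sig_Some_in_I:
  assumes "in_I m fs a" "fst a \<noteq> 0"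
  shows "\<exists>S. sig m mo (snd a) = Some S"
  using in_I_msupp[OF assms] by (cases "sig m mo (snd a)") (auto simp: sig_None)

lemma sig_Some_G:
  assumes "g \<in> Gs N" "fst g \<noteq> 0"
  shows "\<exists>S. sig m mo (snd g) = Some S"
  using sig_Some_in_I GN_in_I assms by blast

lemma lscale_nz:
  fixes g :: "('x, 'k) lpoly"
  assumes "fst g \<noteq> 0" "c \<noteq> 0"
  shows "fst (lscale c t g) \<noteq> 0 \<and> lpp ord (fst (lscale c t g)) = t + lpp ord (fst g)"
  using lpp_single_mult[OF assms(2) assms(1)] by (simp add: fst_lscale)

lemma lscale_zero:
  fixes g :: "('x, 'k) lpoly"
  assumes "fst g = 0"
  shows "fst (lscale c t g) = 0"
  using assms by (simp add: fst_lscale)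

lemma exists_nonrew:
  assumes T: "snd T < m"
  shows "\<exists>g t. nonrew T g \<and> sig m mo (vmult t (snd g)) = Some T"
proof -
  define A where "A = {g\<in>Gs N. \<exists>M. sig m mo (snd g) = Some M \<and> mdvd M T}"
  have fin: "finite A" unfolding A_def using GN_finite by simp
  have g0: "(fs (snd T), unitv (snd T)) \<in> Gs 0" using G0 T by (auto simp: G_init_def)
  have "Gs 0 \<subseteq> Gs N" using Gs_mono[of 0 N] by simp
  then have g0N: "(fs (snd T), unitv (snd T)) \<in> Gs N" using g0 by blast
  have "mdvd (0, snd T) T" by (simp add: mdvd_def pp_dvd_def)
  then have "(fs (snd T), unitv (snd T)) \<in> A" using g0N sig_unitv[OF T] unfolding A_def by simp
  then have ne: "A \<noteq> {}" by blast
  have AG: "A \<subseteq> Gs N" unfolding A_def by blast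
  have irr: "\<forall>x\<in>A. \<not> lt x x" using po AG unfolding strict_po_on_def by blast
  have tr: "\<forall>x\<in>A. \<forall>y\<in>A. \<forall>z\<in>A. lt x y \<longrightarrow> lt y z \<longrightarrow> lt x z"
  proof (intro ballI impI)
    fix x y z assume "x \<in> A" "y \<in> A" "z \<in> A" "lt x y" "lt y z"
    then show "lt x z" using po AG unfolding strict_po_on_def by blast
  qed
  obtain g where g: "g \<in> A" "\<forall>y\<in>A. \<not> lt y g" using finite_min_ex[OF fin ne irr tr] by blast
  obtain M where M: "sig m mo (snd g) = Some M" "mdvd M T" and gN: "g \<in> Gs N" using g(1) unfolding A_def by blast
  have nr: "nonrew T g"
    unfolding nonrew_def using gN M g unfolding A_def by blast
  obtain t where t: "fst T = fst M + t" using M(2) by (auto simp: mdvd_def pp_dvd_iff)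
  have "sig m mo (vmult t (snd g)) = map_option (shft t) (sig m mo (snd g))" by (rule sig_vmult)
  also have "\<dots> = Some (shft t M)" using M(1) by simp
  also have "shft t M = T" using t M(2) by (cases T, cases M) (simp add: shft_def mdvd_def add.commute)
  finally show ?thesis using nr by blast
qed

lemma cmp:
  assumes IH: "\<forall>S'. (S', T0) \<in> mrel \<longrightarrow> Cov S'"
    and T0: "snd T0 < m" and ST: "mo S T0"
    and x: "in_I m fs x" "fst x \<noteq> 0" "sig m mo (snd x) = Some S"
    and z: "in_I m fs z" "sig m mo (snd z) = Some S"
  shows "(fst z \<noteq> 0 \<and> lpp ord (fst z) = lpp ord (fst x)) \<or> red_below x S \<or> (fst z \<noteq> 0 \<and> red_below z S)"
proof -
  have iS: "snd S < m" using sig_index[OF x(3)] .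
  obtain c where c: "c \<noteq> 0" and sl: "sig_less mo (sig m mo (\<lambda>i. snd x i - Poly_Mapping.single 0 c * snd z i)) (Some S)"
    using sig_cancel[OF x(3) z(2)] by blast
  define d where "d = lsub x (lscale c 0 z)"
  have sd: "snd d = (\<lambda>i. snd x i - Poly_Mapping.single 0 c * snd z i)"
    by (simp add: d_def snd_lsub snd_lscale)
  have fd: "fst d = fst x - fst (lscale c 0 z)" by (simp add: d_def fst_lsub)
  have dI: "in_I m fs d" unfolding d_def by (intro in_I_lsub in_I_lscale x(1) z(1))
  have covd: "\<exists>g\<in>Gs N. fst g \<noteq> 0 \<and> pp_dvd (lpp ord (fst g)) (lpp ord (fst d)) \<and>
     sig_less mo (sig m mo (vmult (pp_div (lpp ord (fst d)) (lpp ord (fst g))) (snd g))) (Some S)"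
    if d0: "fst d \<noteq> 0"
  proof -
    obtain S' where S': "sig m mo (snd d) = Some S'" using sig_Some_in_I[OF dI d0] by blast
    have iS': "snd S' < m" using sig_index[OF S'] .
    have S'S: "mo S' S" "S' \<noteq> S" using sl S' sd by auto
    have "mo S' T0" using mo_trans[OF iS' iS T0 S'S(1) ST] .
    moreover have "S' \<noteq> T0"
    proof
      assume "S' = T0"
      then have "S = S'" using mo_antisym[OF iS iS' ] ST S'S(1) by simp
      then show False using S'S(2) by simp
    qed
    ultimately have "(S', T0) \<in> mrel" using iS' T0 by (simp add: mrel_def)
    then have "Cov S'" using IH by blast
    then obtain g where g: "g \<in> Gs N" "fst g \<noteq> 0" "pp_dvd (lpp ord (fst g)) (lpp ord (fst d))"
      "\<not> sig_less mo (Some S') (sig m mo (vmult (pp_div (lpp ord (fst d)) (lpp ord (fst g))) (snd g)))"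
      using dI d0 S' unfolding Cov_def by blast
    have "sig_less mo (Some S') (Some S)" using S'S by simp
    then have "sig_less mo (sig m mo (vmult (pp_div (lpp ord (fst d)) (lpp ord (fst g))) (snd g))) (Some S)"
      using sig_le_less_trans[OF valid_Some[OF iS'] valid_sig valid_Some[OF iS] g(4)] by blast
    then show ?thesis using g by blast
  qed
  show ?thesis
  proof (cases "fst z = 0")
    case True
    then have "fst d = fst x" using fd lscale_zero by simp
    then show ?thesis using covd x(2) unfolding red_below_def by auto
  next
    case z0: False
    have lz: "fst (lscale c 0 z) \<noteq> 0" "lpp ord (fst (lscale c 0 z)) = lpp ord (fst z)"
      using lscale_nz[OF z0 c, of 0] by simp_all
    consider (eq) "lpp ord (fst z) = lpp ord (fst x)"
      | (lt1) "ord (lpp ord (fst z)) (lpp ord (fst x))" "lpp ord (fst z) \<noteq> lpp ord (fst x)"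
      | (lt2) "ord (lpp ord (fst x)) (lpp ord (fst z))" "lpp ord (fst z) \<noteq> lpp ord (fst x)"
      using ord_total by blast
    then show ?thesis
    proof cases
      case eq then show ?thesis using z0 by blast
    next
      case lt1
      have "fst x - fst (lscale c 0 z) \<noteq> 0 \<and> lpp ord (fst x - fst (lscale c 0 z)) = lpp ord (fst x)"
        by (rule lpp_diff[OF x(2)]) (use lt1 lz in simp)
      then have "fst d \<noteq> 0" "lpp ord (fst d) = lpp ord (fst x)" using fd by simp_all
      then show ?thesis using covd unfolding red_below_def by auto
    next
      case lt2
      have "fst (lscale c 0 z) - fst x \<noteq> 0 \<and> lpp ord (fst (lscale c 0 z) - fst x) = lpp ord (fst (lscale c 0 z))"
        by (rule lpp_diff[OF lz(1)]) (use lt2 lz in auto)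
      then have A: "fst (lscale c 0 z) - fst x \<noteq> 0" and B: "lpp ord (fst (lscale c 0 z) - fst x) = lpp ord (fst z)"
        using lz by simp_all
      have e: "fst d = - (fst (lscale c 0 z) - fst x)" using fd by simp
      have "fst d \<noteq> 0" unfolding e neg_equal_0_iff_equal by (rule A)
      moreover have "lpp ord (fst d) = lpp ord (fst z)" unfolding e lpp_uminus by (rule B)
      ultimately have "fst d \<noteq> 0" "lpp ord (fst d) = lpp ord (fst z)" by simp_all
      then show ?thesis using covd z0 unfolding red_below_def by auto
    qed
  qed
qed

end

context agc_loc
begin

lemma mdvd_shft: "mdvd N0 (shft u N0)"
proof -
  have "u + fst N0 = fst N0 + u" by (simp add: add.commute)
  then have "pp_dvd (fst N0) (u + fst N0)" unfolding pp_dvd_iff by blast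
  then show ?thesis by (simp add: mdvd_def shft_def)
qed

lemma sigv:
  fixes u :: "('x, 'k) vec"
  assumes "sig m mo u = Some M"
  shows "sig m mo (vmult t u) = Some (shft t M)"
proof -
  have "sig m mo (vmult t u) = map_option (shft t) (sig m mo u)" by (rule sig_vmult)
  then show ?thesis using assms by simp
qed

lemma main_aux: "snd T < m \<longrightarrow> Cov T \<and> Crit T"
proof (induction T rule: wf_induct[OF wf_mrel])
  case (1 T)
  show ?case
  proof
    assume T: "snd T < m"
    have IH: "\<And>S. (S, T) \<in> mrel \<Longrightarrow> Cov S \<and> Crit S"
      using 1 by (auto simp: mrel_def)
    have IHcov: "\<forall>S'. (S', T) \<in> mrel \<longrightarrow> Cov S'" using IH by blast
    have crit: "Crit T"
      unfolding Crit_def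
    proof (intro allI impI, elim conjE)
      fix g t assume nr: "nonrew T g" and gt: "sig m mo (vmult t (snd g)) = Some T" and g0: "fst g \<noteq> 0"
      show "\<not> topred (lscale 1 t g)"
      proof
        assume tp: "topred (lscale 1 t g)"
        define b where "b = lscale 1 t g"
        have gN: "g \<in> Gs N" using nr unfolding nonrew_def by blast
        have bl: "fst b \<noteq> 0" "lpp ord (fst b) = t + lpp ord (fst g)"
          using lscale_nz[OF g0, of 1 t] unfolding b_def by simp_all
        have sb: "sig m mo (snd b) = Some T" using gt by (simp add: b_def snd_lscale1)
        define L where "L = lpp ord (fst b)"
        define \<sigma> where "\<sigma> h = sig m mo (vmult (pp_div L (lpp ord (fst h))) (snd h))" for h :: "('x, 'k) lpoly"
        define H where "H = {h \<in> Gs N. fst h \<noteq> 0 \<and> pp_dvd (lpp ord (fst h)) L \<and> sig_less mo (\<sigma> h) (Some T)}"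
        have "red_below b T" using tp sb unfolding topred_def b_def by auto
        then obtain g3 where g3: "g3 \<in> Gs N" "fst g3 \<noteq> 0" "pp_dvd (lpp ord (fst g3)) L"
            "sig_less mo (\<sigma> g3) (Some T)"
          unfolding red_below_def \<sigma>_def L_def by blast
        then have "g3 \<in> H" unfolding H_def by blast
        then have ne: "H \<noteq> {}" by blast
        have fin: "finite H" unfolding H_def using GN_finite by simp
        have irr: "\<forall>x\<in>H. \<not> sig_less mo (\<sigma> x) (\<sigma> x)" using sig_less_irrefl by blast
        have tr: "\<forall>x\<in>H. \<forall>y\<in>H. \<forall>z\<in>H. sig_less mo (\<sigma> x) (\<sigma> y) \<longrightarrow> sig_less mo (\<sigma> y) (\<sigma> z) \<longrightarrow> sig_less mo (\<sigma> x) (\<sigma> z)"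
          unfolding \<sigma>_def using sig_less_trans[OF valid_sig valid_sig valid_sig] by blast
        obtain h where h: "h \<in> H" "\<forall>y\<in>H. \<not> sig_less mo (\<sigma> y) (\<sigma> h)"
          using finite_min_ex[OF fin ne irr tr] by blast
        have hN: "h \<in> Gs N" and h0: "fst h \<noteq> 0" and hd: "pp_dvd (lpp ord (fst h)) L"
          and hT: "sig_less mo (\<sigma> h) (Some T)" using h(1) unfolding H_def by auto
        define s where "s = pp_div L (lpp ord (fst h))"
        have Ls: "L = lpp ord (fst h) + s" using pp_div_add[OF hd] s_def by simp
        have hI: "in_I m fs h" using GN_in_I hN by blast
        obtain S0 where S0: "sig m mo (snd h) = Some S0" using sig_Some_G[OF hN h0] by blast
        define S where "S = shft s S0"
        have \<sigma>h: "\<sigma> h = Some S" unfolding \<sigma>_def S_def s_def[symmetric] by (rule sigv[OF S0])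
        have ST: "mo S T" "S \<noteq> T" using hT \<sigma>h by auto
        have iS: "snd S < m" using sig_index[OF S0] by (simp add: S_def shft_def)
        have mr: "(S, T) \<in> mrel" using iS T ST by (simp add: mrel_def)
        have IHS: "Cov S" "Crit S" using IH[OF mr] by auto
        define hs where "hs = lscale 1 s h"
        have hsI: "in_I m fs hs" unfolding hs_def by (rule in_I_lscale[OF hI])
        have hsl: "fst hs \<noteq> 0" "lpp ord (fst hs) = s + lpp ord (fst h)"
          using lscale_nz[OF h0, of 1 s] unfolding hs_def by simp_all
        have hsL: "lpp ord (fst hs) = L" using hsl(2) Ls by (simp add: add.commute)
        have shs: "sig m mo (snd hs) = Some S" using \<sigma>h unfolding hs_def \<sigma>_def s_def by (simp add: snd_lscale1)
        obtain g2 s2 where g2: "nonrew S g2" "sig m mo (vmult s2 (snd g2)) = Some S"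
          using exists_nonrew[OF iS] by blast
        have g2N: "g2 \<in> Gs N" using g2(1) unfolding nonrew_def by blast
        define z where "z = lscale 1 s2 g2"
        have zI: "in_I m fs z" unfolding z_def using in_I_lscale GN_in_I g2N by blast
        have sz: "sig m mo (snd z) = Some S" using g2(2) by (simp add: z_def snd_lscale1)
        have g20: "fst g2 \<noteq> 0" if "fst z \<noteq> 0"
          using that lscale_zero unfolding z_def by blast
        have "(fst z \<noteq> 0 \<and> lpp ord (fst z) = lpp ord (fst hs)) \<or> red_below hs S \<or> (fst z \<noteq> 0 \<and> red_below z S)"
          by (rule cmp[OF IHcov T ST(1) hsI hsl(1) shs zI sz])
        then show False
        proof (elim disjE conjE)
          assume "red_below hs S"
          then obtain g3 where g3: "g3 \<in> Gs N" "fst g3 \<noteq> 0" "pp_dvd (lpp ord (fst g3)) (lpp ord (fst hs))"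
            "sig_less mo (sig m mo (vmult (pp_div (lpp ord (fst hs)) (lpp ord (fst g3))) (snd g3))) (Some S)"
            unfolding red_below_def by blast
          have a1: "sig_less mo (\<sigma> g3) (\<sigma> h)" using g3(4) hsL \<sigma>h unfolding \<sigma>_def by simp
          have "sig_less mo (\<sigma> g3) (Some T)"
            using sig_less_trans[OF valid_sig valid_Some[OF iS] valid_Some[OF T]] a1 \<sigma>h hT
            unfolding \<sigma>_def by simp
          then have "g3 \<in> H" using g3 hsL unfolding H_def by simp
          then show False using h(2) a1 by blast
        next
          assume z0: "fst z \<noteq> 0" and rz: "red_below z S"
          have "topred z" using z0 sz rz unfolding topred_def by blast
          moreover have "\<not> topred z" using IHS(2) g2 g20[OF z0] unfolding Crit_def z_def by blast
          ultimately show False by blast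
        next
          assume z0: "fst z \<noteq> 0" and lz: "lpp ord (fst z) = lpp ord (fst hs)"
          have g20': "fst g2 \<noteq> 0" by (rule g20[OF z0])
          have zl: "lpp ord (fst z) = s2 + lpp ord (fst g2)"
            using lscale_nz[OF g20', of 1 s2] unfolding z_def by simp
          have L1: "L = lpp ord (fst g) + t" using bl(2) by (simp add: L_def add.commute)
          have L2: "L = lpp ord (fst g2) + s2" using lz hsL zl by (simp add: add.commute)
          define lc where "lc = pp_lcm (lpp ord (fst g)) (lpp ord (fst g2))"
          define tf where "tf = pp_div lc (lpp ord (fst g))"
          define tg where "tg = pp_div lc (lpp ord (fst g2))"
          have d1: "pp_dvd (lpp ord (fst g)) L" using L1 by (simp add: pp_dvd_iff)
          have d2: "pp_dvd (lpp ord (fst g2)) L" using L2 by (simp add: pp_dvd_iff)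
          have "pp_dvd lc L" unfolding lc_def by (rule pp_lcm_least[OF d1 d2])
          then obtain u where u: "L = lc + u" by (auto simp: pp_dvd_iff)
          have lc1: "lc = lpp ord (fst g) + tf"
            using pp_div_add[OF pp_lcm_dvd1[of "lpp ord (fst g)" "lpp ord (fst g2)"]] unfolding tf_def lc_def by simp
          have lc2: "lc = lpp ord (fst g2) + tg"
            using pp_div_add[OF pp_lcm_dvd2[of "lpp ord (fst g2)" "lpp ord (fst g)"]] unfolding tg_def lc_def by simp
          have "lpp ord (fst g) + t = lpp ord (fst g) + (u + tf)"
            using L1 u lc1 by (simp add: ac_simps)
          then have tu: "t = u + tf" by simp
          have "lpp ord (fst g2) + s2 = lpp ord (fst g2) + (u + tg)"
            using L2 u lc2 by (simp add: ac_simps)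
          then have su: "s2 = u + tg" by simp
          obtain M0 where M0: "sig m mo (snd g) = Some M0" using sig_Some_G[OF gN g0] by blast
          obtain M2 where M2: "sig m mo (snd g2) = Some M2" using sig_Some_G[OF g2N g20'] by blast
          define N0 where "N0 = shft tf M0"
          define N2 where "N2 = shft tg M2"
          have sN0: "sig m mo (vmult tf (snd g)) = Some N0" unfolding N0_def by (rule sigv[OF M0])
          have sN2: "sig m mo (vmult tg (snd g2)) = Some N2" unfolding N2_def by (rule sigv[OF M2])
          have iN0: "snd N0 < m" using sig_index[OF sN0] .
          have iN2: "snd N2 < m" using sig_index[OF sN2] .
          have TN0: "T = shft u N0"
          proof -
            have "Some T = sig m mo (vmult (u + tf) (snd g))" using gt tu by simp
            also have "\<dots> = sig m mo (vmult u (vmult tf (snd g)))" by (simp add: vmult_add)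
            also have "\<dots> = Some (shft u N0)" by (rule sigv[OF sN0])
            finally show ?thesis by simp
          qed
          have SN2: "S = shft u N2"
          proof -
            have "Some S = sig m mo (vmult (u + tg) (snd g2))" using g2(2) su by simp
            also have "\<dots> = sig m mo (vmult u (vmult tg (snd g2)))" by (simp add: vmult_add)
            also have "\<dots> = Some (shft u N2)" by (rule sigv[OF sN2])
            finally show ?thesis by simp
          qed
          have n02: "\<not> mo N0 N2"
          proof
            assume "mo N0 N2"
            then have "mo T S" using mo_shft[OF iN0 iN2] TN0 SN2 by simp
            then have "T = S" using mo_antisym[OF T iS] ST(1) by simp
            then show False using ST(2) by simp
          qed
          have m20: "mo N2 N0" using mo_total[OF iN0 iN2] n02 by blast
          have ne20: "N2 \<noteq> N0" using n02 mo_refl[OF iN0] by blast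
          define p where "p = (tf, g, tg, g2)"
          have cp: "is_cpair ord m mo g g2 p"
            unfolding is_cpair_def Let_def p_def tf_def tg_def lc_def
            using g0 g20' sN0 sN2 n02 unfolding tf_def tg_def lc_def by simp
          have rg: "regular_cpair m mo p"
            unfolding regular_cpair_def p_def using sN0 sN2 m20 ne20 by simp
          have dT: "mdvd N0 T" using TN0 mdvd_shft by simp
          have dS: "mdvd N2 S" using SN2 mdvd_shft by simp
          have nrw: "\<not> cpair_gen_rewritable m mo lt (Gs N) p"
          proof
            assume "cpair_gen_rewritable m mo lt (Gs N) p"
            then have "gen_rewritable m mo lt (Gs N) tf g \<or> gen_rewritable m mo lt (Gs N) tg g2"
              unfolding cpair_gen_rewritable_def p_def by simp
            then show False
            proof
              assume "gen_rewritable m mo lt (Gs N) tf g"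
              then obtain b' M where b': "b' \<in> Gs N" "sig m mo (snd b') = Some M" "mdvd M N0" "lt b' g"
                unfolding gen_rewritable_def using sN0 by auto
              have "mdvd M T" using mdvd_trans[OF b'(3) dT] .
              then show False using nr b' unfolding nonrew_def by blast
            next
              assume "gen_rewritable m mo lt (Gs N) tg g2"
              then obtain b' M where b': "b' \<in> Gs N" "sig m mo (snd b') = Some M" "mdvd M N2" "lt b' g2"
                unfolding gen_rewritable_def using sN2 by auto
              have "mdvd M S" using mdvd_trans[OF b'(3) dS] .
              then show False using g2(1) b' unfolding nonrew_def by blast
            qed
          qed
          obtain h' where h': "h' \<in> Gs N" "lt h' g" "sig m mo (snd h') = sig m mo (vmult (fst p) (snd g))"
            using pair_reduced[OF gN g2N cp rg nrw] by blast
          have "sig m mo (snd h') = Some N0" using h'(3) sN0 by (simp add: p_def)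
          then show False using nr h' dT unfolding nonrew_def by blast
        qed
      qed
    qed
    have cov: "Cov T"
      unfolding Cov_def
    proof (intro allI impI, elim conjE)
      fix a assume aI: "in_I m fs a" and a0: "fst a \<noteq> 0" and sa: "sig m mo (snd a) = Some T"
      show "\<exists>g\<in>Gs N. fst g \<noteq> 0 \<and> pp_dvd (lpp ord (fst g)) (lpp ord (fst a)) \<and>
          \<not> sig_less mo (Some T) (sig m mo (vmult (pp_div (lpp ord (fst a)) (lpp ord (fst g))) (snd g)))"
      proof (cases "red_below a T")
        case True
        then obtain g where g: "g \<in> Gs N" "fst g \<noteq> 0" "pp_dvd (lpp ord (fst g)) (lpp ord (fst a))"
          "sig_less mo (sig m mo (vmult (pp_div (lpp ord (fst a)) (lpp ord (fst g))) (snd g))) (Some T)"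
          unfolding red_below_def by blast
        have "\<not> sig_less mo (Some T) (sig m mo (vmult (pp_div (lpp ord (fst a)) (lpp ord (fst g))) (snd g)))"
          using sig_less_asym[OF valid_sig valid_Some[OF T] g(4)] .
        then show ?thesis using g by blast
      next
        case False
        obtain g t where g: "nonrew T g" "sig m mo (vmult t (snd g)) = Some T"
          using exists_nonrew[OF T] by blast
        have gN: "g \<in> Gs N" using g(1) unfolding nonrew_def by blast
        define z where "z = lscale 1 t g"
        have zI: "in_I m fs z" unfolding z_def using in_I_lscale GN_in_I gN by blast
        have sz: "sig m mo (snd z) = Some T" using g(2) by (simp add: z_def snd_lscale1)
        have g0: "fst g \<noteq> 0" if "fst z \<noteq> 0"
          using that lscale_zero unfolding z_def by blast
        have "(fst z \<noteq> 0 \<and> lpp ord (fst z) = lpp ord (fst a)) \<or> red_below a T \<or> (fst z \<noteq> 0 \<and> red_below z T)"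
          by (rule cmp[OF IHcov T mo_refl[OF T] aI a0 sa zI sz])
        then show ?thesis
        proof (elim disjE conjE)
          assume "red_below a T" then show ?thesis using False by blast
        next
          assume z0: "fst z \<noteq> 0" and rz: "red_below z T"
          have "topred z" using z0 sz rz unfolding topred_def by blast
          moreover have "\<not> topred z" using crit g g0[OF z0] unfolding Crit_def z_def by blast
          ultimately show ?thesis by blast
        next
          assume z0: "fst z \<noteq> 0" and lz: "lpp ord (fst z) = lpp ord (fst a)"
          have g0': "fst g \<noteq> 0" by (rule g0[OF z0])
          have "lpp ord (fst z) = t + lpp ord (fst g)"
            using lscale_nz[OF g0', of 1 t] unfolding z_def by simp
          then have la: "lpp ord (fst a) = lpp ord (fst g) + t" using lz by (simp add: add.commute)
          have "pp_dvd (lpp ord (fst g)) (lpp ord (fst a))" using la by (simp add: pp_dvd_iff)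
          moreover have "pp_div (lpp ord (fst a)) (lpp ord (fst g)) = t" using la by simp
          ultimately show ?thesis using gN g0' g(2) sig_less_irrefl by auto
        qed
      qed
    qed
    show "Cov T \<and> Crit T" using cov crit by blast
  qed
qed

lemma main_cov: "snd T < m \<Longrightarrow> Cov T"
  using main_aux by blast

end

theorem theorem3p1:
  fixes ord :: "('x::finite) pp \<Rightarrow> 'x pp \<Rightarrow> bool"
    and mo :: "'x pp \<times> nat \<Rightarrow> 'x pp \<times> nat \<Rightarrow> bool"
    and m :: nat
    and fs :: "('x, 'k::field) vec"
    and lt :: "('x, 'k) lpoly \<Rightarrow> ('x, 'k) lpoly \<Rightarrow> bool"
    and N :: nat
    and Gs :: "nat \<Rightarrow> ('x, 'k) lpoly set"
    and CPs :: "nat \<Rightarrow> ('x, 'k) cpair set"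
    and ps :: "nat \<Rightarrow> ('x, 'k) cpair"
    and rs :: "nat \<Rightarrow> ('x, 'k) lpoly option"
  assumes "term_order ord"
    and "module_term_order m mo"
    and "agc_run ord m mo fs lt N Gs CPs ps rs"
    and "strict_po_on (Gs N) lt"
    and "admissible_run N lt ps rs"
  shows "labeled_GB ord m mo fs (Gs N)"
proof -
  interpret agc_loc ord mo m fs lt N Gs CPs ps rs
    using assms by (unfold_locales) auto
  show ?thesis
    unfolding labeled_GB_def
  proof (intro conjI allI impI)
    show "finite (Gs N)" by (rule GN_finite)
    show "\<forall>g\<in>Gs N. in_I m fs g" by (rule GN_in_I)
  next
    fix a assume a: "in_I m fs a \<and> fst a \<noteq> 0"
    obtain T where T: "sig m mo (snd a) = Some T" using sig_Some_in_I a by blast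
    have "Cov T" using main_cov sig_index[OF T] by blast
    then show "\<exists>g\<in>Gs N. fst g \<noteq> 0 \<and> pp_dvd (lpp ord (fst g)) (lpp ord (fst a)) \<and>
           \<not> sig_less mo (sig m mo (snd a))
               (sig m mo (vmult (pp_div (lpp ord (fst a)) (lpp ord (fst g))) (snd g)))"
      using a T unfolding Cov_def by (metis (no_types, lifting))
  qed
qed

end
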